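(* Let $\Gamma$ be a gain operator on $\ell^\infty_+(\mathcal I)$ with $|\mathcal I|<\infty$. The following are equivalent: (a) there exists $\rho\in\mathcal K_\infty$ such that $\Gamma_\rho$ satisfies the $\oplus$-MBI property; (b) there exists a path of strict decay for $\Gamma$.
   Context: Let $\mathcal I$ be a nonempty countable index set; $\ell^\infty_+(\mathcal I)$ is the cone of nonnegative real families $s=(s_i)_{i\in\mathcal I}$ with $\|s\|:=\sup_i|s_i|<\infty$, ordered componentwise; $\mathbf 1$ is the all-ones vector; $\oplus$ is the componentwise maximum. $\mathcal K_\infty$: continuous strictly increasing unbounded $\gamma:\mathbb R_+\to\mathbb R_+$ with $\gamma(0)=0$, acting componentwise. For $\mathcal J\subset\mathcal I$, $s_{|\mathcal J}$ agrees with $s$ on $\mathcal J$ and is $0$ elsewhere. Gain operator: for each $i$ a finite (possibly empty) $\mathcal I_i\subset\mathcal I\setminus\{i\}$; directed graph $\mathcal G$ with vertices $\mathcal I$ and edges $ji$, $j\in\mathcal I_i$; a pointwise equicontinuous family $\gamma_{ij}\in\mathcal K_\infty$ ($ji\in E(\mathcal G)$); functions $\mu_i:\ell^\infty_+(\mathcal I)\to[0,\infty]$ with (M1) some $\xi\in\mathcal K_\infty$ has $\mu_i(0)=0$, $\mu_i(s)\ge\xi(\|s\|)$; (M2) $\mu_i$ monotone; (M3) for each finite $\mathcal J$, $\mu_i$ restricted to vectors vanishing off $\mathcal J$ is finite-valued and continuous; (M4) for each norm-bounded $A$ and $\varepsilon>0$ there is $\delta>0$ with $\sup_i|\mu_i(s_{|\mathcal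 I_i})-\mu_i(s^0_{|\mathcal I_i})|\le\varepsilon$ whenever $s^0\in A$, $\|s-s^0\|\le\delta$. $\Gamma_i(s):=\mu_i([\gamma_{ij}(s_j)]_{j\in\mathcal I_i})$ (argument zero outside $\mathcal I_i$). $\Gamma_\rho:=(\mathrm{id}+\rho)\circ\Gamma$. A monotone $T$ has the $\oplus$-MBI property if there is $\varphi\in\mathcal K_\infty$ such that for all $s,b$, $s\le b\oplus T(s)$ implies $\|s\|\le\varphi(\|b\|)$. A path of strict decay for $\Gamma$ is a map $\sigma:\mathbb R_+\to\ell^\infty_+(\mathcal I)$ such that: (i) for some $\rho\in\mathcal K_\infty$, $\Gamma_\rho(\sigma(r))\le\sigma(r)$ for all $r\ge0$; (ii) $\varphi_{\min}(r)\mathbf 1\le\sigma(r)\le\varphi_{\max}(r)\mathbf 1$ for some $\varphi_{\min},\varphi_{\max}\in\mathcal K_\infty$; (iii) each $\sigma_i\in\mathcal K_\infty$; (iv) for each compact $K\subset(0,\infty)$ there are $0<l\le L$ with $l|r_1-r_2|\le|\sigma_i^{-1}(r_1)-\sigma_i^{-1}(r_2)|\le L|r_1-r_2|$ for all $r_1,r_2\in K$, $i\in\mathcal I$. *)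

theory Defs
  imports "HOL-Analysis.Analysis"
begin

text \<open>The index set is modelled by a finite type 'i (nonempty and countable automatically).
  Elements of the cone are functions s :: 'i => real with s i >= 0 for all i.\<close>

definition pos_cone :: "('i \<Rightarrow> real) set" where
  "pos_cone = {s. \<forall>i. 0 \<le> s i}"

definition supnorm :: "('i::finite \<Rightarrow> real) \<Rightarrow> real" where
  "supnorm s = Max (range (\<lambda>i. \<bar>s i\<bar>))"

definition Kinf :: "(real \<Rightarrow> real) \<Rightarrow> bool" where
  "Kinf g \<longleftrightarrow> continuous_on {0..} g \<and> strict_mono_on {0..} g \<and> g 0 = 0
     \<and> (\<forall>r\<ge>0. 0 \<le> g r) \<and> (\<forall>M. \<exists>r\<ge>0. M < g r)"

definition restr :: "('i \<Rightarrow> real) \<Rightarrow> 'i set \<Rightarrow> ('i \<Rightarrow> real)" where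
  "restr s J = (\<lambda>j. if j \<in> J then s j else 0)"

text \<open>Data of a gain operator: neighbour sets Ii, gains gamma i j (edge j -> i, j in Ii i),
  and functions mu i with values in [0,infinity] (modelled as ereal).\<close>
definition gain_operator ::
  "('i::finite \<Rightarrow> 'i set) \<Rightarrow> ('i \<Rightarrow> 'i \<Rightarrow> real \<Rightarrow> real) \<Rightarrow> ('i \<Rightarrow> ('i \<Rightarrow> real) \<Rightarrow> ereal) \<Rightarrow> bool"
where
  "gain_operator Ii gam mu \<longleftrightarrow>
     (\<forall>i. finite (Ii i) \<and> i \<notin> Ii i)
   \<and> (\<forall>i. \<forall>j\<in>Ii i. Kinf (gam i j))
   \<and> (\<forall>r\<ge>0. \<forall>\<epsilon>>0. \<exists>\<delta>>0. \<forall>i. \<forall>j\<in>Ii i. \<forall>r'\<ge>0.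
         \<bar>r' - r\<bar> < \<delta> \<longrightarrow> \<bar>gam i j r' - gam i j r\<bar> < \<epsilon>)
   \<and> (\<forall>i. \<forall>s\<in>pos_cone. 0 \<le> mu i s)
   \<comment> \<open>(M1)\<close>
   \<and> (\<exists>\<xi>. Kinf \<xi> \<and> (\<forall>i. mu i (\<lambda>_. 0) = 0 \<and> (\<forall>s\<in>pos_cone. ereal (\<xi> (supnorm s)) \<le> mu i s)))
   \<comment> \<open>(M2)\<close>
   \<and> (\<forall>i. \<forall>s\<in>pos_cone. \<forall>s'\<in>pos_cone. s \<le> s' \<longrightarrow> mu i s \<le> mu i s')
   \<comment> \<open>(M3)\<close>
   \<and> (\<forall>i. \<forall>J. finite J \<longrightarrow>
         (\<forall>s\<in>pos_cone. (\<forall>k. k \<notin> J \<longrightarrow> s k = 0) \<longrightarrow> \<bar>mu i s\<bar> \<noteq> \<infinity>)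
       \<and> continuous_on {s\<in>pos_cone. \<forall>k. k \<notin> J \<longrightarrow> s k = 0} (mu i))
   \<comment> \<open>(M4)\<close>
   \<and> (\<forall>A C \<epsilon>. A \<subseteq> pos_cone \<and> (\<forall>s\<in>A. supnorm s \<le> C) \<and> 0 < \<epsilon> \<longrightarrow>
        (\<exists>\<delta>>0. \<forall>s0\<in>A. \<forall>s\<in>pos_cone. supnorm (s - s0) \<le> \<delta> \<longrightarrow>
            (\<forall>i. \<bar>mu i (restr s (Ii i)) - mu i (restr s0 (Ii i))\<bar> \<le> ereal \<epsilon>)))"

definition Gam ::
  "('i \<Rightarrow> 'i set) \<Rightarrow> ('i \<Rightarrow> 'i \<Rightarrow> real \<Rightarrow> real) \<Rightarrow> ('i \<Rightarrow> ('i \<Rightarrow> real) \<Rightarrow> ereal)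
     \<Rightarrow> ('i \<Rightarrow> real) \<Rightarrow> ('i \<Rightarrow> real)"
where
  "Gam Ii gam mu s = (\<lambda>i. real_of_ereal (mu i (\<lambda>j. if j \<in> Ii i then gam i j (s j) else 0)))"

definition Gam_rho ::
  "(real \<Rightarrow> real) \<Rightarrow> ('i \<Rightarrow> 'i set) \<Rightarrow> ('i \<Rightarrow> 'i \<Rightarrow> real \<Rightarrow> real) \<Rightarrow> ('i \<Rightarrow> ('i \<Rightarrow> real) \<Rightarrow> ereal)
     \<Rightarrow> ('i \<Rightarrow> real) \<Rightarrow> ('i \<Rightarrow> real)"
where
  "Gam_rho \<rho> Ii gam mu s = (\<lambda>i. Gam Ii gam mu s i + \<rho> (Gam Ii gam mu s i))"

text \<open>oplus-MBI property (componentwise maximum b oplus T s = sup b (T s))\<close>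
definition max_MBI :: "(('i::finite \<Rightarrow> real) \<Rightarrow> ('i \<Rightarrow> real)) \<Rightarrow> bool" where
  "max_MBI T \<longleftrightarrow> (\<exists>\<phi>. Kinf \<phi> \<and> (\<forall>s\<in>pos_cone. \<forall>b\<in>pos_cone.
       s \<le> (\<lambda>i. max (b i) (T s i)) \<longrightarrow> supnorm s \<le> \<phi> (supnorm b)))"

definition path_strict_decay ::
  "('i::finite \<Rightarrow> 'i set) \<Rightarrow> ('i \<Rightarrow> 'i \<Rightarrow> real \<Rightarrow> real) \<Rightarrow> ('i \<Rightarrow> ('i \<Rightarrow> real) \<Rightarrow> ereal)
     \<Rightarrow> (real \<Rightarrow> ('i \<Rightarrow> real)) \<Rightarrow> bool"
where
  "path_strict_decay Ii gam mu \<sigma> \<longleftrightarrow>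
     (\<forall>r\<ge>0. \<sigma> r \<in> pos_cone)
   \<and> (\<exists>\<rho>. Kinf \<rho> \<and> (\<forall>r\<ge>0. Gam_rho \<rho> Ii gam mu (\<sigma> r) \<le> \<sigma> r))
   \<and> (\<exists>\<phi>min \<phi>max. Kinf \<phi>min \<and> Kinf \<phi>max \<and>
        (\<forall>r\<ge>0. \<forall>i. \<phi>min r \<le> \<sigma> r i \<and> \<sigma> r i \<le> \<phi>max r))
   \<and> (\<forall>i. Kinf (\<lambda>r. \<sigma> r i))
   \<and> (\<forall>K. compact K \<and> K \<subseteq> {0<..} \<longrightarrow>
        (\<exists>l L. 0 < l \<and> l \<le> L \<and> (\<forall>r1\<in>K. \<forall>r2\<in>K. \<forall>i.
           l * \<bar>r1 - r2\<bar> \<le> \<bar>inv_into {0..} (\<lambda>r. \<sigma> r i) r1 - inv_into {0..} (\<lambda>r. \<sigma> r i) r2\<bar>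
         \<and> \<bar>inv_into {0..} (\<lambda>r. \<sigma> r i) r1 - inv_into {0..} (\<lambda>r. \<sigma> r i) r2\<bar> \<le> L * \<bar>r1 - r2\<bar>)))"

end

theory Submission
  imports Defs
begin

definition pl :: "(int \<Rightarrow> real) \<Rightarrow> real \<Rightarrow> real" where
  "pl f u = f \<lfloor>u\<rfloor> + (u - of_int \<lfloor>u\<rfloor>) * (f (\<lfloor>u\<rfloor>+1) - f \<lfloor>u\<rfloor>)"

lemma pl_on:
  assumes "of_int k \<le> u" "u \<le> of_int k + 1"
  shows "pl f u = f k + (u - of_int k) * (f (k+1) - f k)"
proof (cases "u < of_int k + 1")
  case True
  then have "\<lfloor>u\<rfloor> = k" using assms by linarith
  then show ?thesis by (simp add: pl_def)
next
  case False
  then have u: "u = of_int (k+1)" using assms by simp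
  then have "\<lfloor>u\<rfloor> = k+1" by simp
  then show ?thesis using u by (simp add: pl_def)
qed

lemma pl_cont: "isCont (pl f) u"
proof -
  define k where "k = \<lfloor>u\<rfloor>"
  have c1: "continuous_on {of_int (k-1)..of_int k} (pl f)"
  proof -
    have "continuous_on {of_int (k-1)..of_int k} (\<lambda>u. f (k-1) + (u - of_int (k-1)) * (f (k-1+1) - f (k-1)))"
      by (intro continuous_intros)
    then show ?thesis
      by (rule continuous_on_eq) (subst pl_on[of "k-1"]; auto)
  qed
  have c2: "continuous_on {of_int k..of_int (k+1)} (pl f)"
  proof -
    have "continuous_on {of_int k..of_int (k+1)} (\<lambda>u. f k + (u - of_int k) * (f (k+1) - f k))"
      by (intro continuous_intros)
    then show ?thesis
      by (rule continuous_on_eq) (subst pl_on[of "k"]; auto)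
  qed
  have "continuous_on ({of_int (k-1)..of_int k} \<union> {of_int k..of_int (k+1)}) (pl f)"
    by (rule continuous_on_closed_Un[OF _ _ c1 c2]) auto
  moreover have "{of_int (k-1)..of_int k} \<union> {of_int k..of_int (k+1)} = {of_int (k-1)..of_int (k+1)::real}"
    by auto
  ultimately have "continuous_on {of_int (k-1)..of_int (k+1)} (pl f)" by simp
  moreover have "u \<in> interior {of_int (k-1)..of_int (k+1)::real}"
    unfolding k_def by simp linarith
  ultimately show ?thesis using continuous_on_interior by blast
qed

lemma inc_less_nat:
  fixes f :: "int \<Rightarrow> real"
  assumes inc: "\<And>k. f k < f (k+1)"
  shows "f k < f (k + int (Suc n))"
proof (induction n)
  case 0 then show ?case using inc[of k] by simp
next
  case (Suc n)
  have i: "f (k + int (Suc n)) < f (k + int (Suc n) + 1)" by (rule inc)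
  have e: "k + int (Suc (Suc n)) = k + int (Suc n) + 1" by simp
  show ?case unfolding e using Suc.IH i by linarith
qed

lemma inc_less:
  fixes f :: "int \<Rightarrow> real"
  assumes inc: "\<And>k. f k < f (k+1)" and "k < l"
  shows "f k < f l"
proof -
  have "l = k + int (Suc (nat (l - k - 1)))" using assms(2) by simp
  then show ?thesis using inc_less_nat[of f k "nat (l-k-1)", OF inc] by simp
qed

lemma inc_le:
  fixes f :: "int \<Rightarrow> real"
  assumes inc: "\<And>k. f k < f (k+1)" and "k \<le> l"
  shows "f k \<le> f l"
  using inc_less[of f k l, OF inc] assms(2) by (cases "k = l") auto

lemma pl_bounds:
  fixes f :: "int \<Rightarrow> real"
  assumes inc: "\<And>k. f k < f (k+1)"
  shows "f \<lfloor>u\<rfloor> \<le> pl f u" "pl f u < f (\<lfloor>u\<rfloor>+1)"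
proof -
  have t: "0 \<le> u - of_int \<lfloor>u\<rfloor>" "u - of_int \<lfloor>u\<rfloor> < 1" by linarith+
  have d: "0 < f (\<lfloor>u\<rfloor>+1) - f \<lfloor>u\<rfloor>" using inc[of "\<lfloor>u\<rfloor>"] by simp
  show "f \<lfloor>u\<rfloor> \<le> pl f u" unfolding pl_def using t d by simp
  have "(u - of_int \<lfloor>u\<rfloor>) * (f (\<lfloor>u\<rfloor>+1) - f \<lfloor>u\<rfloor>) < 1 * (f (\<lfloor>u\<rfloor>+1) - f \<lfloor>u\<rfloor>)"
    using t d by (intro mult_strict_right_mono) auto
  then show "pl f u < f (\<lfloor>u\<rfloor>+1)" unfolding pl_def by simp
qed

lemma pl_strict:
  fixes f :: "int \<Rightarrow> real"
  assumes inc: "\<And>k. f k < f (k+1)" and uv: "u < v"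
  shows "pl f u < pl f v"
proof -
  define a where "a = \<lfloor>u\<rfloor>"
  define b where "b = \<lfloor>v\<rfloor>"
  have ab: "a \<le> b" unfolding a_def b_def using uv by (simp add: floor_mono)
  show ?thesis
  proof (cases "a = b")
    case True
    have d: "0 < f (a+1) - f a" using inc[of a] by simp
    have "pl f v - pl f u = (v - u) * (f (a+1) - f a)"
      unfolding pl_def a_def[symmetric] b_def[symmetric] True by (simp add: algebra_simps)
    also have "\<dots> > 0" using uv d by simp
    finally show ?thesis by simp
  next
    case False
    then have "a + 1 \<le> b" using ab by simp
    then have "f (a+1) \<le> f b" using inc_le[of f, OF inc] by blast
    then show ?thesis using pl_bounds[of f, OF inc, of u] pl_bounds[of f, OF inc, of v]
      unfolding a_def b_def by linarith
  qed
qed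

lemma tele_nat:
  fixes f :: "int \<Rightarrow> real"
  assumes "\<forall>k. a \<le> k \<and> k < a + int n \<longrightarrow> m \<le> f(k+1) - f k \<and> f(k+1) - f k \<le> M"
  shows "m * of_int (int n) \<le> f (a + int n) - f a \<and> f (a + int n) - f a \<le> M * of_int (int n)"
  using assms
proof (induction n)
  case 0 then show ?case by simp
next
  case (Suc n)
  then have IH: "m * of_int (int n) \<le> f (a + int n) - f a \<and> f (a + int n) - f a \<le> M * of_int (int n)"
    by auto
  have s: "m \<le> f(a + int n+1) - f (a + int n) \<and> f(a + int n+1) - f (a + int n) \<le> M"
    using Suc.prems by auto
  have e: "a + int (Suc n) = a + int n + 1" by simp
  show ?case unfolding e using IH s by (simp add: algebra_simps)
qed

lemma tele:
  fixes f :: "int \<Rightarrow> real"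
  assumes "\<forall>k. a \<le> k \<and> k < b \<longrightarrow> m \<le> f(k+1) - f k \<and> f(k+1) - f k \<le> M" "a \<le> b"
  shows "m * of_int (b - a) \<le> f b - f a \<and> f b - f a \<le> M * of_int (b - a)"
proof -
  have e: "b = a + int (nat (b - a))" using assms(2) by simp
  have "m * of_int (int (nat (b-a))) \<le> f (a + int (nat (b-a))) - f a \<and> f (a + int (nat (b-a))) - f a \<le> M * of_int (int (nat (b-a)))"
    by (rule tele_nat) (use assms(1) e in auto)
  then show ?thesis using e by (metis add_diff_cancel_left')
qed

lemma mono2:
  fixes x m s M :: real
  assumes "0 \<le> x" "m \<le> s" "s \<le> M"
  shows "m * x \<le> x * s" "x * s \<le> M * x"
  using mult_left_mono[OF assms(2) assms(1)] mult_left_mono[OF assms(3) assms(1)]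
  by (simp_all add: mult.commute)

lemma pl_lip:
  fixes f :: "int \<Rightarrow> real"
  assumes sl: "\<forall>k. a0 \<le> k \<and> k \<le> b0 \<longrightarrow> m \<le> f(k+1) - f k \<and> f(k+1) - f k \<le> M"
    and m0: "0 \<le> m"
    and u: "of_int a0 \<le> u" and uv: "u \<le> v" and v: "v < of_int b0 + 1"
  shows "m*(v-u) \<le> pl f v - pl f u \<and> pl f v - pl f u \<le> M*(v-u)"
proof -
  define a where "a = \<lfloor>u\<rfloor>"
  define b where "b = \<lfloor>v\<rfloor>"
  have ab: "a \<le> b" unfolding a_def b_def using uv by (simp add: floor_mono)
  have a0: "a0 \<le> a" unfolding a_def using u by linarith
  have b0: "b \<le> b0" unfolding b_def using v by linarith
  have sa: "m \<le> f(a+1) - f a \<and> f(a+1) - f a \<le> M" using sl a0 ab b0 by auto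
  have sb: "m \<le> f(b+1) - f b \<and> f(b+1) - f b \<le> M" using sl a0 ab b0 by auto
  have tu: "0 \<le> u - of_int a" "u - of_int a \<le> 1" unfolding a_def by linarith+
  have tv: "0 \<le> v - of_int b" unfolding b_def by linarith
  show ?thesis
  proof (cases "a = b")
    case True
    have "pl f v - pl f u = (v - u) * (f (a+1) - f a)"
      unfolding pl_def a_def[symmetric] b_def[symmetric] True by (simp add: algebra_simps)
    moreover have "m*(v-u) \<le> (v - u) * (f (a+1) - f a)" "(v - u) * (f (a+1) - f a) \<le> M*(v-u)"
      using mono2[of "v-u" m "f (a+1) - f a" M] sa uv by auto
    ultimately show ?thesis by simp
  next
    case False
    then have ab1: "a + 1 \<le> b" using ab by simp
    have T: "m * of_int (b - (a+1)) \<le> f b - f (a+1) \<and> f b - f (a+1) \<le> M * of_int (b - (a+1))"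
      by (rule tele) (use sl a0 b0 ab1 in auto)
    have e: "pl f v - pl f u = (v - of_int b) * (f (b+1) - f b) + (f b - f (a+1))
         + (1 - (u - of_int a)) * (f (a+1) - f a)"
      unfolding pl_def a_def[symmetric] b_def[symmetric] by (simp add: algebra_simps)
    have l: "v - u = (v - of_int b) + of_int (b - (a+1)) + (1 - (u - of_int a))" by simp
    have 1: "m * (v - of_int b) \<le> (v - of_int b) * (f (b+1) - f b)"
         "(v - of_int b) * (f (b+1) - f b) \<le> M * (v - of_int b)"
      using mono2[of "v - of_int b" m "f (b+1) - f b" M] sb tv by auto
    have 2: "m * (1 - (u - of_int a)) \<le> (1 - (u - of_int a)) * (f (a+1) - f a)"
         "(1 - (u - of_int a)) * (f (a+1) - f a) \<le> M * (1 - (u - of_int a))"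
      using mono2[of "1 - (u - of_int a)" m "f (a+1) - f a" M] sa tu by auto
    show ?thesis unfolding e l using T 1 2 by (simp add: algebra_simps)
  qed
qed

lemma kinf_sm: "Kinf g \<Longrightarrow> strict_mono_on {0..} g"
  unfolding Kinf_def by blast

lemma kinf_less:
  assumes "Kinf g" "0 \<le> x" "x < y"
  shows "g x < g y"
  by (rule strict_mono_onD[OF kinf_sm[OF assms(1)]]) (use assms in auto)

lemma kinf_mono_le:
  assumes "Kinf g" "0 \<le> x" "x \<le> y"
  shows "g x \<le> g y"
proof (cases "x = y")
  case False
  then have "x < y" using assms by simp
  then show ?thesis using kinf_less[OF assms(1,2)] by (simp add: less_imp_le)
qed simp

lemma kinf_le_iff:
  assumes "Kinf g" "0 \<le> x" "0 \<le> y"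
  shows "g x \<le> g y \<longleftrightarrow> x \<le> y"
proof
  assume "g x \<le> g y"
  then show "x \<le> y" using kinf_less[OF assms(1,3), of x] by (cases "x \<le> y") auto
qed (rule kinf_mono_le[OF assms(1,2)])

lemma kinf_nonneg: "Kinf g \<Longrightarrow> 0 \<le> x \<Longrightarrow> 0 \<le> g x"
  unfolding Kinf_def by auto

lemma kinf_zero: "Kinf g \<Longrightarrow> g 0 = 0"
  unfolding Kinf_def by auto

lemma kinf_pos: "Kinf g \<Longrightarrow> 0 < x \<Longrightarrow> 0 < g x"
  using kinf_less[of g 0 x] kinf_zero[of g] by auto

lemma kinf_surj:
  assumes g: "Kinf g" and y: "0 \<le> y"
  shows "\<exists>x\<ge>0. g x = y"
proof -
  obtain r where r: "r \<ge> 0" "y < g r" using g unfolding Kinf_def by blast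
  have c: "continuous_on {0..r} g"
    using g unfolding Kinf_def by (auto intro: continuous_on_subset)
  obtain x where "0 \<le> x" "x \<le> r" "g x = y"
    using IVT'[of g 0 y r, OF _ _ _ c] r y kinf_zero[OF g] by auto
  then show ?thesis by auto
qed

lemma kinf_inj: "Kinf g \<Longrightarrow> inj_on g {0..}"
  unfolding Kinf_def by (auto intro: strict_mono_on_imp_inj_on)

lemma kinf_inv:
  assumes g: "Kinf g" and y: "0 \<le> y"
  shows "0 \<le> inv_into {0..} g y" "g (inv_into {0..} g y) = y"
proof -
  have "y \<in> g ` {0..}" using kinf_surj[OF g y] by auto
  then show "0 \<le> inv_into {0..} g y" "g (inv_into {0..} g y) = y"
    using inv_into_into[of y g "{0..}"] f_inv_into_f[of y g "{0..}"] by auto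
qed

lemma kinf_inv_f:
  assumes g: "Kinf g" and x: "0 \<le> x"
  shows "inv_into {0..} g (g x) = x"
  using inv_into_f_f[OF kinf_inj[OF g], of x] x by auto

subsection \<open>The scalar path built from an int-indexed sequence\<close>

definition sig :: "(int \<Rightarrow> real) \<Rightarrow> real \<Rightarrow> real" where
  "sig f r = (if r \<le> 0 then 0 else pl f (ln r))"

locale seqp =
  fixes f :: "int \<Rightarrow> real"
  assumes inc: "\<And>k. f k < f (k+1)"
    and lim0: "(\<lambda>n. f (- int n)) \<longlonglongrightarrow> 0"
    and unb: "\<And>M. \<exists>k. M < f k"
begin

lemma f_nonneg: "0 \<le> f k"
proof -
  have "\<forall>n\<ge>nat (-k). f (- int n) \<le> f k"
    using inc_le[of f, OF inc] by auto
  then show ?thesis using LIMSEQ_le_const2[OF lim0] by blast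
qed

lemma f_pos: "0 < f k"
  using f_nonneg[of "k-1"] inc[of "k-1"] by simp

lemma pl_pos: "0 < pl f u"
  using pl_bounds(1)[of f, OF inc, of u] f_pos[of "\<lfloor>u\<rfloor>"] by simp

lemma pl_small:
  assumes "0 < e"
  shows "\<exists>U. \<forall>u\<le>U. pl f u < e"
proof -
  obtain N where N: "\<forall>n\<ge>N. norm (f (- int n) - 0) < e"
    using lim0 assms unfolding LIMSEQ_def dist_real_def by auto
  have fN: "f (- int N) < e" using N by auto
  show ?thesis
  proof (intro exI allI impI)
    fix u :: real assume u: "u \<le> - real N - 1"
    have "\<lfloor>u\<rfloor> + 1 \<le> - int N" using u by linarith
    then have "f (\<lfloor>u\<rfloor> + 1) \<le> f (- int N)" using inc_le[of f, OF inc] by blast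
    then show "pl f u < e" using pl_bounds(2)[of f, OF inc, of u] fN by linarith
  qed
qed

lemma sig_nonneg: "0 \<le> sig f r"
  unfolding sig_def using pl_pos by (simp add: less_imp_le)

lemma sig_pos: "0 < r \<Longrightarrow> 0 < sig f r"
  unfolding sig_def using pl_pos by simp

lemma sig_cont_pos: "continuous_on {0<..} (sig f)"
proof -
  have "continuous_on {0<..} (\<lambda>r. pl f (ln r))"
    by (intro continuous_at_imp_continuous_on ballI isCont_o2[OF isCont_ln_pos pl_cont]) auto
  then show ?thesis
    by (rule continuous_on_eq) (auto simp: sig_def)
qed

lemma sig_cont: "continuous_on {0..} (sig f)"
  unfolding continuous_on_eq_continuous_within
proof
  fix x :: real assume x: "x \<in> {0..}"
  show "continuous (at x within {0..}) (sig f)"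
  proof (cases "x = 0")
    case False
    then have "x \<in> {0<..}" using x by auto
    then have "isCont (sig f) x"
      using sig_cont_pos continuous_on_eq_continuous_at[of "{0<..}" "sig f"] by auto
    then show ?thesis using continuous_at_imp_continuous_within by blast
  next
    case True
    show ?thesis unfolding continuous_within_eps_delta True
    proof (intro allI impI)
      fix e :: real assume e: "0 < e"
      obtain U where U: "\<forall>u\<le>U. pl f u < e" using pl_small[OF e] by auto
      show "\<exists>d>0. \<forall>x'\<in>{0..}. dist x' 0 < d \<longrightarrow> dist (sig f x') (sig f 0) < e"
      proof (intro exI conjI ballI impI)
        show "0 < exp U" by simp
        fix r :: real assume r: "r \<in> {0..}" "dist r 0 < exp U"
        show "dist (sig f r) (sig f 0) < e"
        proof (cases "r = 0")
          case True then show ?thesis using e by (simp add: sig_def)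
        next
          case False
          then have rp: "0 < r" using r by auto
          have "ln r < ln (exp U)" using rp r by (subst ln_less_cancel_iff) (auto simp: dist_real_def)
          then have "ln r < U" by simp
          then have "pl f (ln r) < e" using U by auto
          then show ?thesis using rp pl_pos[of "ln r"] by (simp add: sig_def dist_real_def)
        qed
      qed
    qed
  qed
qed

lemma sig_strict: "strict_mono_on {0..} (sig f)"
proof (rule strict_mono_onI)
  fix r s :: real assume r: "r \<in> {0..}" and s: "s \<in> {0..}" and rs: "r < s"
  show "sig f r < sig f s"
  proof (cases "r = 0")
    case True then show ?thesis using sig_pos[of s] rs by (simp add: sig_def)
  next
    case False
    then have "0 < r" using r by auto
    then have "ln r < ln s" using rs by simp
    then show ?thesis using pl_strict[of f, OF inc] \<open>0 < r\<close> rs by (simp add: sig_def)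
  qed
qed

lemma sig_kinf: "Kinf (sig f)"
  unfolding Kinf_def
proof (intro conjI allI impI)
  show "continuous_on {0..} (sig f)" by (rule sig_cont)
  show "strict_mono_on {0..} (sig f)" by (rule sig_strict)
  show "sig f 0 = 0" by (simp add: sig_def)
  fix r :: real show "0 \<le> sig f r" by (rule sig_nonneg)
next
  fix M :: real
  obtain k where k: "M < f k" using unb by auto
  have "sig f (exp (of_int k)) = f k" by (simp add: sig_def pl_def)
  then show "\<exists>r\<ge>0. M < sig f r" using k by (intro exI[of _ "exp (of_int k)"]) auto
qed

lemma sig_lip_core:
  assumes K: "compact K" "K \<subseteq> {0<..}" "K \<noteq> {}"
  shows "\<exists>l L. 0 < l \<and> l \<le> L \<and> (\<forall>r1\<in>K. \<forall>r2\<in>K.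
           inv_into {0..} (sig f) r1 \<le> inv_into {0..} (sig f) r2 \<longrightarrow>
           l * (r2 - r1) \<le> inv_into {0..} (sig f) r2 - inv_into {0..} (sig f) r1
         \<and> inv_into {0..} (sig f) r2 - inv_into {0..} (sig f) r1 \<le> L * (r2 - r1))"
proof -
  define g where "g = sig f"
  define iv where "iv = inv_into {0..} g"
  have gk: "Kinf g" unfolding g_def by (rule sig_kinf)
  obtain a where a: "a \<in> K" "\<forall>t\<in>K. a \<le> t" using compact_attains_inf[OF K(1,3)] by auto
  obtain b where b: "b \<in> K" "\<forall>t\<in>K. t \<le> b" using compact_attains_sup[OF K(1,3)] by auto
  have Kpos: "\<And>r. r \<in> K \<Longrightarrow> 0 < r" using K(2) by auto
  have iv0: "\<And>r. r \<in> K \<Longrightarrow> 0 < iv r \<and> g (iv r) = r"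
  proof -
    fix r assume r: "r \<in> K"
    have "0 \<le> iv r" "g (iv r) = r" unfolding iv_def using kinf_inv[OF gk, of r] Kpos[OF r] by auto
    moreover have "iv r \<noteq> 0" using \<open>g (iv r) = r\<close> kinf_zero[OF gk] Kpos[OF r] by auto
    ultimately show "0 < iv r \<and> g (iv r) = r" by auto
  qed
  have ivmono: "\<And>r s. r \<in> K \<Longrightarrow> s \<in> K \<Longrightarrow> r \<le> s \<Longrightarrow> iv r \<le> iv s"
    using iv0 kinf_le_iff[OF gk] by (metis less_imp_le)
  define c where "c = ln (iv a)"
  define d where "d = ln (iv b)"
  have cd: "\<And>r. r \<in> K \<Longrightarrow> c \<le> ln (iv r) \<and> ln (iv r) \<le> d"
    unfolding c_def d_def using ivmono a b iv0 by auto
  have "c \<le> d" using cd[OF a(1)] by simp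
  define a0 where "a0 = \<lfloor>c\<rfloor>"
  define b0 where "b0 = \<lfloor>d\<rfloor>"
  have a0b0: "a0 \<le> b0" unfolding a0_def b0_def using \<open>c \<le> d\<close> by (simp add: floor_mono)
  define S where "S = (\<lambda>k. f (k+1) - f k) ` {a0..b0}"
  have Sfin: "finite S" "S \<noteq> {}" unfolding S_def using a0b0 by auto
  define m where "m = Min S"
  define M where "M = Max S"
  have Spos: "\<forall>x\<in>S. 0 < x" unfolding S_def using inc by auto
  have m0: "0 < m" unfolding m_def using Sfin Spos by auto
  have sl: "\<forall>k. a0 \<le> k \<and> k \<le> b0 \<longrightarrow> m \<le> f(k+1) - f k \<and> f(k+1) - f k \<le> M"
  proof (intro allI impI)
    fix k assume k: "a0 \<le> k \<and> k \<le> b0"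
    then have "f(k+1) - f k \<in> S" unfolding S_def by auto
    then show "m \<le> f(k+1) - f k \<and> f(k+1) - f k \<le> M"
      unfolding m_def M_def using Sfin by auto
  qed
  have mM: "m \<le> M" unfolding m_def M_def using Sfin Min_in[of S] Max_ge[of S] by auto
  define l where "l = exp c / M"
  define L where "L = exp d / m"
  have l0: "0 < l" unfolding l_def using m0 mM by simp
  have lL: "l \<le> L" unfolding l_def L_def using m0 mM \<open>c \<le> d\<close>
    by (simp add: frac_le)
  have main: "\<forall>r1\<in>K. \<forall>r2\<in>K. iv r1 \<le> iv r2 \<longrightarrow>
           l * (r2 - r1) \<le> iv r2 - iv r1 \<and> iv r2 - iv r1 \<le> L * (r2 - r1)"
  proof (intro ballI impI)
    fix r1 r2 assume r1: "r1 \<in> K" and r2: "r2 \<in> K" and le: "iv r1 \<le> iv r2"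
    define u1 where "u1 = ln (iv r1)"
    define u2 where "u2 = ln (iv r2)"
    have x1: "iv r1 = exp u1" unfolding u1_def using iv0[OF r1] by simp
    have x2: "iv r2 = exp u2" unfolding u2_def using iv0[OF r2] by simp
    have u12: "u1 \<le> u2" using le x1 x2 by simp
    have gr1: "r1 = pl f u1" using iv0[OF r1] unfolding x1 g_def sig_def by simp
    have gr2: "r2 = pl f u2" using iv0[OF r2] unfolding x2 g_def sig_def by simp
    have u1c: "of_int a0 \<le> u1" unfolding a0_def u1_def using cd[OF r1] by linarith
    have u2d: "u2 < of_int b0 + 1" unfolding b0_def u2_def using cd[OF r2] by linarith
    have P: "m*(u2-u1) \<le> r2 - r1 \<and> r2 - r1 \<le> M*(u2-u1)"
      unfolding gr1 gr2 by (rule pl_lip[OF sl _ u1c u12 u2d]) (use m0 in simp)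
    have E1: "exp u1 * (u2 - u1) \<le> exp u2 - exp u1"
    proof -
      have "exp u1 * (1 + (u2 - u1)) \<le> exp u1 * exp (u2 - u1)"
        by (rule mult_left_mono) auto
      also have "\<dots> = exp u2" by (simp add: exp_diff)
      finally show ?thesis by (simp add: algebra_simps)
    qed
    have E2: "exp u2 - exp u1 \<le> exp u2 * (u2 - u1)"
    proof -
      have "exp u2 * (1 + (u1 - u2)) \<le> exp u2 * exp (u1 - u2)"
        by (rule mult_left_mono) auto
      also have "\<dots> = exp u1" by (simp add: exp_diff)
      finally show ?thesis by (simp add: algebra_simps)
    qed
    have ec: "exp c \<le> exp u1" using cd[OF r1] unfolding u1_def by simp
    have ed: "exp u2 \<le> exp d" using cd[OF r2] unfolding u2_def by simp
    have du: "0 \<le> u2 - u1" using u12 by simp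
    have A1: "l * (r2 - r1) \<le> exp c * (u2 - u1)"
    proof -
      have "(r2 - r1) / M \<le> u2 - u1"
        using P m0 mM by (simp add: divide_le_eq mult.commute)
      then have "exp c * ((r2 - r1) / M) \<le> exp c * (u2 - u1)" by (rule mult_left_mono) simp
      then show ?thesis unfolding l_def by simp
    qed
    have A2: "exp d * (u2 - u1) \<le> L * (r2 - r1)"
    proof -
      have "u2 - u1 \<le> (r2 - r1) / m"
        using P m0 by (simp add: le_divide_eq mult.commute)
      then have "exp d * (u2 - u1) \<le> exp d * ((r2 - r1) / m)" by (rule mult_left_mono) simp
      then show ?thesis unfolding L_def by simp
    qed
    have B1: "exp c * (u2 - u1) \<le> exp u1 * (u2 - u1)" using ec du by (rule mult_right_mono)
    have B2: "exp u2 * (u2 - u1) \<le> exp d * (u2 - u1)" using ed du by (rule mult_right_mono)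
    show "l * (r2 - r1) \<le> iv r2 - iv r1 \<and> iv r2 - iv r1 \<le> L * (r2 - r1)"
      unfolding x1 x2 using A1 A2 B1 B2 E1 E2 by linarith
  qed
  show ?thesis unfolding g_def[symmetric] iv_def[symmetric] using l0 lL main by blast
qed

lemma sig_lip:
  assumes K: "compact K" "K \<subseteq> {0<..}"
  shows "\<exists>l L. 0 < l \<and> l \<le> L \<and> (\<forall>r1\<in>K. \<forall>r2\<in>K.
           l * \<bar>r1 - r2\<bar> \<le> \<bar>inv_into {0..} (sig f) r1 - inv_into {0..} (sig f) r2\<bar>
         \<and> \<bar>inv_into {0..} (sig f) r1 - inv_into {0..} (sig f) r2\<bar> \<le> L * \<bar>r1 - r2\<bar>)"
proof (cases "K = {}")
  case True then show ?thesis by (intro exI[of _ 1]) auto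
next
  case False
  obtain l L where lL: "0 < l" "l \<le> L" and H: "\<forall>r1\<in>K. \<forall>r2\<in>K.
           inv_into {0..} (sig f) r1 \<le> inv_into {0..} (sig f) r2 \<longrightarrow>
           l * (r2 - r1) \<le> inv_into {0..} (sig f) r2 - inv_into {0..} (sig f) r1
         \<and> inv_into {0..} (sig f) r2 - inv_into {0..} (sig f) r1 \<le> L * (r2 - r1)"
    using sig_lip_core[OF K False] by blast
  have "\<forall>r1\<in>K. \<forall>r2\<in>K.
           l * \<bar>r1 - r2\<bar> \<le> \<bar>inv_into {0..} (sig f) r1 - inv_into {0..} (sig f) r2\<bar>
         \<and> \<bar>inv_into {0..} (sig f) r1 - inv_into {0..} (sig f) r2\<bar> \<le> L * \<bar>r1 - r2\<bar>"
  proof (intro ballI)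
    fix r1 r2 assume r1: "r1 \<in> K" and r2: "r2 \<in> K"
    show "l * \<bar>r1 - r2\<bar> \<le> \<bar>inv_into {0..} (sig f) r1 - inv_into {0..} (sig f) r2\<bar>
         \<and> \<bar>inv_into {0..} (sig f) r1 - inv_into {0..} (sig f) r2\<bar> \<le> L * \<bar>r1 - r2\<bar>"
    proof (cases "inv_into {0..} (sig f) r1 \<le> inv_into {0..} (sig f) r2")
      case True
      then have h: "l * (r2 - r1) \<le> inv_into {0..} (sig f) r2 - inv_into {0..} (sig f) r1
         \<and> inv_into {0..} (sig f) r2 - inv_into {0..} (sig f) r1 \<le> L * (r2 - r1)"
        using H r1 r2 by blast
      then have "0 \<le> L * (r2 - r1)" using True by linarith
      then have "r1 \<le> r2" using lL by (simp add: zero_le_mult_iff)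
      then show ?thesis using h True by (simp add: abs_if)
    next
      case False
      then have h: "l * (r1 - r2) \<le> inv_into {0..} (sig f) r1 - inv_into {0..} (sig f) r2
         \<and> inv_into {0..} (sig f) r1 - inv_into {0..} (sig f) r2 \<le> L * (r1 - r2)"
        using H[rule_format, OF r2 r1] False by linarith
      then have "0 \<le> L * (r1 - r2)" using False by linarith
      then have "r2 \<le> r1" using lL by (simp add: zero_le_mult_iff)
      then show ?thesis using h False by (simp add: abs_if)
    qed
  qed
  then show ?thesis using lL by blast
qed

lemma sig_expr:
  assumes "0 < r"
  shows "sig f r = f \<lfloor>ln r\<rfloor> + (ln r - of_int \<lfloor>ln r\<rfloor>) * (f (\<lfloor>ln r\<rfloor>+1) - f \<lfloor>ln r\<rfloor>)"
  using assms by (simp add: sig_def pl_def)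

end

lemma supnorm_ge: "\<bar>s i\<bar> \<le> supnorm s"
  unfolding supnorm_def by (rule Max_ge) auto

lemma supnorm_le: "(\<And>i. \<bar>s i\<bar> \<le> C) \<Longrightarrow> supnorm s \<le> C"
  unfolding supnorm_def by (subst Max_le_iff) auto

lemma supnorm_nonneg: "0 \<le> supnorm s"
  using supnorm_ge[of s undefined] by simp

lemma supnorm_const: "supnorm (\<lambda>_. c) = \<bar>c\<bar>"
  unfolding supnorm_def by simp

lemma supnorm_attained: "\<exists>i. supnorm s = \<bar>s i\<bar>"
proof -
  have "supnorm s \<in> range (\<lambda>i. \<bar>s i\<bar>)" unfolding supnorm_def by (rule Max_in) auto
  then show ?thesis by auto
qed

lemma supnorm_mono:
  assumes s: "s \<in> pos_cone" and st: "s \<le> t"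
  shows "supnorm s \<le> supnorm t"
proof (rule supnorm_le)
  fix i
  have "0 \<le> s i" using s unfolding pos_cone_def by auto
  moreover have "s i \<le> t i" using st by (simp add: le_fun_def)
  ultimately show "\<bar>s i\<bar> \<le> supnorm t" using supnorm_ge[of t i] by linarith
qed

lemma supnorm_zero: "supnorm s = 0 \<Longrightarrow> s i = 0"
  using supnorm_ge[of s i] by simp

locale gop =
  fixes Ii :: "'i::finite \<Rightarrow> 'i set"
    and gam :: "'i \<Rightarrow> 'i \<Rightarrow> real \<Rightarrow> real"
    and mu :: "'i \<Rightarrow> ('i \<Rightarrow> real) \<Rightarrow> ereal"
  assumes G: "gain_operator Ii gam mu"
begin

abbreviation T where "T \<equiv> Gam Ii gam mu"

definition arg :: "'i \<Rightarrow> ('i \<Rightarrow> real) \<Rightarrow> ('i \<Rightarrow> real)" where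
  "arg i s = (\<lambda>j. if j \<in> Ii i then gam i j (s j) else 0)"

lemma T_def': "T s i = real_of_ereal (mu i (arg i s))"
  unfolding Gam_def arg_def by simp

lemma c2: "j \<in> Ii i \<Longrightarrow> Kinf (gam i j)"
  using G[unfolded gain_operator_def, THEN conjunct2, THEN conjunct1] by blast

lemma c4:
  assumes "s \<in> pos_cone" shows "0 \<le> mu i s"
  using G[unfolded gain_operator_def, THEN conjunct2, THEN conjunct2, THEN conjunct2, THEN conjunct1, rule_format, OF assms] .

lemma c5: "\<exists>\<xi>. Kinf \<xi> \<and> (\<forall>i. mu i (\<lambda>_. 0) = 0 \<and> (\<forall>s\<in>pos_cone. ereal (\<xi> (supnorm s)) \<le> mu i s))"
  by (rule G[unfolded gain_operator_def, THEN conjunct2, THEN conjunct2, THEN conjunct2, THEN conjunct2, THEN conjunct1])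

lemma mu0: "mu i (\<lambda>_. 0) = 0"
proof -
  obtain \<xi> where "\<forall>i. mu i (\<lambda>_. 0) = 0 \<and> (\<forall>s\<in>pos_cone. ereal (\<xi> (supnorm s)) \<le> mu i s)"
    using c5 by blast
  then show ?thesis by simp
qed

lemma c6:
  assumes "s \<in> pos_cone" "s' \<in> pos_cone" "s \<le> s'" shows "mu i s \<le> mu i s'"
  using G[unfolded gain_operator_def, THEN conjunct2, THEN conjunct2, THEN conjunct2, THEN conjunct2, THEN conjunct2, THEN conjunct1, rule_format, OF assms] .

lemma c7:
  assumes s: "s \<in> pos_cone" shows "\<bar>mu i s\<bar> \<noteq> \<infinity>"
proof -
  have "finite (UNIV::'i set) \<longrightarrow>
         (\<forall>s\<in>pos_cone. (\<forall>k. k \<notin> UNIV \<longrightarrow> s k = 0) \<longrightarrow> \<bar>mu i s\<bar> \<noteq> \<infinity>)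
       \<and> continuous_on {s\<in>pos_cone. \<forall>k. k \<notin> UNIV \<longrightarrow> s k = 0} (mu i)"
    using G[unfolded gain_operator_def, THEN conjunct2, THEN conjunct2, THEN conjunct2, THEN conjunct2, THEN conjunct2, THEN conjunct2, THEN conjunct1, THEN spec[of _ i], THEN spec[of _ UNIV]] .
  then have "\<forall>s\<in>pos_cone. \<bar>mu i s\<bar> \<noteq> \<infinity>" by simp
  then show ?thesis using s by simp
qed

lemma c8:
  assumes "A \<subseteq> pos_cone \<and> (\<forall>s\<in>A. supnorm s \<le> C) \<and> 0 < \<epsilon>"
  shows "\<exists>\<delta>>0. \<forall>s0\<in>A. \<forall>s\<in>pos_cone. supnorm (s - s0) \<le> \<delta> \<longrightarrow>
            (\<forall>i. \<bar>mu i (restr s (Ii i)) - mu i (restr s0 (Ii i))\<bar> \<le> ereal \<epsilon>)"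
  using G[unfolded gain_operator_def, THEN conjunct2, THEN conjunct2, THEN conjunct2, THEN conjunct2, THEN conjunct2, THEN conjunct2, THEN conjunct2, rule_format, OF assms] .

lemma arg_pos: "s \<in> pos_cone \<Longrightarrow> arg i s \<in> pos_cone"
  unfolding arg_def pos_cone_def using c2 kinf_nonneg by auto

lemma arg_mono: "s \<in> pos_cone \<Longrightarrow> s \<le> t \<Longrightarrow> arg i s \<le> arg i t"
  unfolding arg_def pos_cone_def le_fun_def using c2 kinf_mono_le by auto

lemma arg_restr: "restr (arg i s) (Ii i) = arg i s"
  unfolding arg_def restr_def by auto

lemma mu_fin: "s \<in> pos_cone \<Longrightarrow> mu i s = ereal (real_of_ereal (mu i s))"
  using c7 by (metis abs_ereal.simps(3) ereal_real)

lemma T_ereal: "s \<in> pos_cone \<Longrightarrow> mu i (arg i s) = ereal (T s i)"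
  unfolding T_def' using mu_fin[OF arg_pos] by simp

lemma T_nonneg: "s \<in> pos_cone \<Longrightarrow> 0 \<le> T s i"
proof -
  assume s: "s \<in> pos_cone"
  have "0 \<le> mu i (arg i s)" by (rule c4[OF arg_pos[OF s]])
  then show ?thesis using T_ereal[OF s, of i] by simp
qed

lemma T_mono: "s \<in> pos_cone \<Longrightarrow> s \<le> t \<Longrightarrow> T s i \<le> T t i"
proof -
  assume s: "s \<in> pos_cone" and st: "s \<le> t"
  have t: "t \<in> pos_cone" using s st unfolding pos_cone_def le_fun_def by (auto intro: order_trans)
  have "mu i (arg i s) \<le> mu i (arg i t)"
    by (rule c6[OF arg_pos[OF s] arg_pos[OF t] arg_mono[OF s st]])
  then show ?thesis using T_ereal[OF s] T_ereal[OF t] by simp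
qed

lemma T_zero: "T (\<lambda>_. 0) i = 0"
proof -
  have "arg i (\<lambda>_. 0) = (\<lambda>_. 0)" unfolding arg_def using c2 kinf_zero by auto
  then show ?thesis unfolding T_def' using mu0 by simp
qed

lemma T_tendsto:
  assumes x: "\<And>n. x n \<in> pos_cone" and y: "y \<in> pos_cone"
    and lim: "\<And>j. (\<lambda>n. x n j) \<longlonglongrightarrow> y j"
  shows "(\<lambda>n. T (x n) i) \<longlonglongrightarrow> T y i"
proof (rule LIMSEQ_I)
  fix e :: real assume e: "0 < e"
  obtain d where d: "d > 0" and H: "\<forall>s\<in>pos_cone. supnorm (s - arg i y) \<le> d \<longrightarrow>
            (\<forall>i'. \<bar>mu i' (restr s (Ii i')) - mu i' (restr (arg i y) (Ii i'))\<bar> \<le> ereal (e/2))"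
    using c8[of "{arg i y}" "supnorm (arg i y)" "e/2"] arg_pos[OF y] e by auto
  have ev: "eventually (\<lambda>n. \<bar>arg i (x n) j - arg i y j\<bar> < d) sequentially" for j
  proof -
    show "eventually (\<lambda>n. \<bar>arg i (x n) j - arg i y j\<bar> < d) sequentially"
    proof (cases "j \<in> Ii i")
      case True
      have cg: "continuous_on {0..} (gam i j)" using c2[OF True] unfolding Kinf_def by blast
      have "(\<lambda>n. gam i j (x n j)) \<longlonglongrightarrow> gam i j (y j)"
        by (rule continuous_on_tendsto_compose[OF cg lim]) (use x y in \<open>auto simp: pos_cone_def\<close>)
      then have "eventually (\<lambda>n. dist (gam i j (x n j)) (gam i j (y j)) < d) sequentially"
        using d by (rule tendstoD)
      then show ?thesis unfolding arg_def using True by (simp add: dist_real_def)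
    qed (simp add: arg_def d)
  qed
  have "eventually (\<lambda>n. \<forall>j. \<bar>arg i (x n) j - arg i y j\<bar> < d) sequentially"
    by (rule eventually_all_finite[OF ev])
  then obtain N where N: "\<And>n. n \<ge> N \<Longrightarrow> \<forall>j. \<bar>arg i (x n) j - arg i y j\<bar> < d"
    unfolding eventually_sequentially by blast
  show "\<exists>N. \<forall>n\<ge>N. norm (T (x n) i - T y i) < e"
  proof (intro exI allI impI)
    fix n assume n: "n \<ge> N"
    have "supnorm (arg i (x n) - arg i y) \<le> d"
      by (rule supnorm_le) (use N[OF n] in \<open>auto intro: less_imp_le\<close>)
    then have "\<bar>mu i (restr (arg i (x n)) (Ii i)) - mu i (restr (arg i y) (Ii i))\<bar> \<le> ereal (e/2)"
      using H arg_pos[OF x[of n]] by blast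
    then have "\<bar>ereal (T (x n) i) - ereal (T y i)\<bar> \<le> ereal (e/2)"
      unfolding arg_restr T_ereal[OF x[of n]] T_ereal[OF y] .
    then have "\<bar>T (x n) i - T y i\<bar> \<le> e/2" by simp
    then show "norm (T (x n) i - T y i) < e" using e by simp
  qed
qed

end

locale mbi = gop Ii gam mu for Ii :: "'i::finite \<Rightarrow> 'i set" and gam mu +
  fixes \<rho> \<phi> :: "real \<Rightarrow> real"
  assumes rk: "Kinf \<rho>" and pk: "Kinf \<phi>"
    and mbi: "\<And>s b. s \<in> pos_cone \<Longrightarrow> b \<in> pos_cone \<Longrightarrow>
        s \<le> (\<lambda>i. max (b i) (Gam_rho \<rho> Ii gam mu s i)) \<Longrightarrow> supnorm s \<le> \<phi> (supnorm b)"
begin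

definition TR :: "('i \<Rightarrow> real) \<Rightarrow> 'i \<Rightarrow> real" where
  "TR s i = T s i + \<rho> (T s i)"

lemma TR_eq: "Gam_rho \<rho> Ii gam mu s i = TR s i"
  unfolding Gam_rho_def TR_def by simp

lemma rho_nonneg: "0 \<le> t \<Longrightarrow> 0 \<le> \<rho> t"
  using kinf_nonneg[OF rk] .

lemma rho_mono: "0 \<le> s \<Longrightarrow> s \<le> t \<Longrightarrow> \<rho> s \<le> \<rho> t"
  using kinf_mono_le[OF rk] .

lemma TR_mono: "s \<in> pos_cone \<Longrightarrow> s \<le> t \<Longrightarrow> TR s i \<le> TR t i"
  unfolding TR_def using T_mono[of s t i] T_nonneg[of s i] rho_mono by (meson add_mono)

lemma TR_nonneg: "s \<in> pos_cone \<Longrightarrow> 0 \<le> TR s i"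
  unfolding TR_def using T_nonneg[of s i] rho_nonneg[of "T s i"] by simp

lemma pos_coneI: "(\<And>i. 0 \<le> s i) \<Longrightarrow> s \<in> pos_cone"
  unfolding pos_cone_def by auto

lemma pos_coneD: "s \<in> pos_cone \<Longrightarrow> 0 \<le> s i"
  unfolding pos_cone_def by auto

subsection \<open>Greatest fixed points\<close>

definition S :: "real \<Rightarrow> ('i \<Rightarrow> real) set" where
  "S c = {x \<in> pos_cone. \<forall>i. x i \<le> max c (TR x i)}"

definition w :: "real \<Rightarrow> ('i \<Rightarrow> real)" where
  "w c = (\<lambda>i. SUP x\<in>S c. x i)"

lemma S_bound:
  assumes c: "0 \<le> c" and x: "x \<in> S c"
  shows "x i \<le> \<phi> c"
proof -
  have xp: "x \<in> pos_cone" using x unfolding S_def by auto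
  have h: "x \<le> (\<lambda>i. max ((\<lambda>_. c) i) (Gam_rho \<rho> Ii gam mu x i))"
    using x unfolding S_def TR_eq le_fun_def by auto
  have pc: "(\<lambda>_. c) \<in> pos_cone" using c by (auto intro: pos_coneI)
  have "supnorm x \<le> \<phi> (supnorm (\<lambda>_::'i. c))"
    using mbi[OF xp pc h] .
  then have "supnorm x \<le> \<phi> c" using c by (simp add: supnorm_const)
  then show ?thesis using supnorm_ge[of x i] by linarith
qed

lemma zero_S: "0 \<le> c \<Longrightarrow> (\<lambda>_. 0) \<in> S c"
  unfolding S_def by (auto intro: pos_coneI)

lemma S_bdd: "0 \<le> c \<Longrightarrow> bdd_above ((\<lambda>x. x i) ` S c)"
  using S_bound by (auto intro!: bdd_aboveI2)

lemma w_upper: "0 \<le> c \<Longrightarrow> x \<in> S c \<Longrightarrow> x i \<le> w c i"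
  unfolding w_def using S_bdd by (auto intro: cSUP_upper)

lemma w_nonneg: "0 \<le> c \<Longrightarrow> 0 \<le> w c i"
  using w_upper[OF _ zero_S] by fastforce

lemma w_pos: "0 \<le> c \<Longrightarrow> w c \<in> pos_cone"
  using w_nonneg by (auto intro: pos_coneI)

lemma w_le_F: assumes c: "0 \<le> c" shows "w c i \<le> max c (TR (w c) i)"
proof -
  have e: "w c i = (SUP x\<in>S c. x i)" by (simp add: w_def)
  have "(SUP x\<in>S c. x i) \<le> max c (TR (w c) i)"
  proof (rule cSUP_least)
    show "S c \<noteq> {}" using zero_S[OF c] by auto
    fix x assume x: "x \<in> S c"
    have "x \<le> w c" using w_upper[OF c x] by (simp add: le_fun_def)
    then have "TR x i \<le> TR (w c) i" using x TR_mono unfolding S_def by auto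
    moreover have "x i \<le> max c (TR x i)" using x unfolding S_def by auto
    ultimately show "x i \<le> max c (TR (w c) i)" by linarith
  qed
  then show ?thesis using e by simp
qed

lemma w_in_S: "0 \<le> c \<Longrightarrow> w c \<in> S c"
  unfolding S_def using w_pos w_le_F by auto

lemma w_fix: assumes c: "0 \<le> c" shows "w c i = max c (TR (w c) i)"
proof -
  define F where "F = (\<lambda>i. max c (TR (w c) i))"
  have wF: "w c \<le> F" unfolding F_def le_fun_def using w_le_F[OF c] by auto
  have Fp: "F \<in> pos_cone" unfolding F_def using c by (auto intro: pos_coneI)
  have "F \<in> S c" unfolding S_def
  proof (safe intro!: Fp)
    fix j
    have "TR (w c) j \<le> TR F j" by (rule TR_mono[OF w_pos[OF c] wF])
    then show "F j \<le> max c (TR F j)" unfolding F_def by auto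
  qed
  then have "F i \<le> w c i" using w_upper[OF c] by auto
  then have a: "max c (TR (w c) i) \<le> w c i" unfolding F_def .
  show ?thesis using a w_le_F[OF c, of i] by linarith
qed

lemma w_ge: "0 \<le> c \<Longrightarrow> c \<le> w c i"
  using w_fix[of c i] by simp

lemma w_TR: "0 \<le> c \<Longrightarrow> TR (w c) i \<le> w c i"
  using w_fix[of c i] by simp

lemma w_zero: "w 0 i = 0"
proof -
  have "w 0 i \<le> \<phi> 0" using S_bound[OF _ w_in_S] by auto
  then show ?thesis using w_nonneg[of 0 i] kinf_zero[OF pk] by simp
qed


definition lev :: "nat \<Rightarrow> real \<Rightarrow> real" where
  "lev m t = t + \<rho> t * (1/2 + 1/2^(m+1))"

lemma lev0: "lev 0 t = t + \<rho> t"
  unfolding lev_def by simp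

lemma lev_mono: "0 \<le> s \<Longrightarrow> s \<le> t \<Longrightarrow> lev m s \<le> lev m t"
  unfolding lev_def using rho_mono[of s t] by (intro add_mono mult_right_mono) auto

lemma lev_dec: assumes "0 \<le> t" shows "lev (Suc m) t \<le> lev m t"
proof -
  have "(1::real)/2^(Suc m+1) \<le> 1/2^(m+1)" by (simp add: field_simps)
  then show ?thesis unfolding lev_def using rho_nonneg[OF assms]
    by (simp add: mult_left_mono)
qed

lemma lev_dec_strict: assumes "0 < t" shows "lev (Suc m) t < lev m t"
proof -
  have "(1::real)/2^(Suc m+1) < 1/2^(m+1)" by (simp add: field_simps)
  moreover have "0 < \<rho> t" using kinf_pos[OF rk assms] .
  ultimately show ?thesis unfolding lev_def by simp
qed

lemma lev_ge_D: "0 \<le> t \<Longrightarrow> t + \<rho> t / 2 \<le> lev m t"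
  unfolding lev_def using rho_nonneg[of t] by (simp add: field_simps)

lemma lev_le_TR: assumes "0 \<le> t" shows "lev m t \<le> t + \<rho> t"
proof -
  have "(1::real)/2^(m+1) \<le> 1/2" by (simp add: field_simps)
  then have "1/2 + (1::real)/2^(m+1) \<le> 1" by linarith
  then have "\<rho> t * (1/2 + 1/2^(m+1)) \<le> \<rho> t * 1"
    using rho_nonneg[OF assms] by (rule mult_left_mono)
  then show ?thesis unfolding lev_def by simp
qed

lemma lev_zero: "lev m 0 = 0"
  unfolding lev_def using kinf_zero[OF rk] by simp

lemma rho_tendsto:
  assumes "\<And>n. 0 \<le> x n" "0 \<le> y" "x \<longlonglongrightarrow> y"
  shows "(\<lambda>n. \<rho> (x n)) \<longlonglongrightarrow> \<rho> y"
  by (rule continuous_on_tendsto_compose[of "{0..}" \<rho>])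
     (use rk assms in \<open>auto simp: Kinf_def\<close>)

lemma TR_tendsto:
  assumes x: "\<And>n. x n \<in> pos_cone" and y: "y \<in> pos_cone"
    and lim: "\<And>j. (\<lambda>n. x n j) \<longlonglongrightarrow> y j"
  shows "(\<lambda>n. TR (x n) i) \<longlonglongrightarrow> TR y i"
  unfolding TR_def
  using T_tendsto[OF x y lim] rho_tendsto[OF T_nonneg[OF x] T_nonneg[OF y]]
  by (intro tendsto_add) auto

subsection \<open>Floor chains\<close>

primrec fch :: "('i \<Rightarrow> real) \<Rightarrow> ('i \<Rightarrow> real) \<Rightarrow> nat \<Rightarrow> ('i \<Rightarrow> real)" where
  "fch A Q 0 = A"
| "fch A Q (Suc m) = (\<lambda>i. max (lev (Suc m) (T (fch A Q m) i)) ((fch A Q m i + Q i)/2))"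

context
  fixes A Q :: "'i \<Rightarrow> real"
  assumes Ap: "A \<in> pos_cone" and QA: "\<And>i. Q i < A i" and ATR: "\<And>i. TR A i \<le> A i"
    and Qp: "Q \<in> pos_cone"
begin

lemma fch_inv: "fch A Q m \<in> pos_cone \<and> (\<forall>i. Q i < fch A Q m i) \<and> (\<forall>i. lev m (T (fch A Q m) i) \<le> fch A Q m i)"
proof (induction m)
  case 0 then show ?case using Ap QA ATR by (simp add: lev0 TR_def)
next
  case (Suc m)
  define P where "P = fch A Q m"
  define P' where "P' = fch A Q (Suc m)"
  have Pp: "P \<in> pos_cone" and QP: "\<And>i. Q i < P i" and Plev: "\<And>i. lev m (T P i) \<le> P i"
    using Suc unfolding P_def by auto
  have P'e: "\<And>i. P' i = max (lev (Suc m) (T P i)) ((P i + Q i)/2)"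
    unfolding P'_def P_def by simp
  have QP': "Q i < P' i" for i
  proof -
    have "Q i < (P i + Q i)/2" using QP[of i] by simp
    then show ?thesis unfolding P'e[of i] by (rule max.strict_coboundedI2)
  qed
  have P'p: "P' \<in> pos_cone"
    by (rule pos_coneI, rule order_trans[OF pos_coneD[OF Qp] less_imp_le[OF QP']])
  have P'P: "P' \<le> P"
    unfolding le_fun_def
  proof
    fix i
    have "lev (Suc m) (T P i) \<le> lev m (T P i)" by (rule lev_dec[OF T_nonneg[OF Pp]])
    then show "P' i \<le> P i" using P'e[of i] Plev[of i] QP[of i] by simp
  qed
  have "\<forall>i. lev (Suc m) (T P' i) \<le> P' i"
  proof
    fix i
    have "T P' i \<le> T P i" by (rule T_mono[OF P'p P'P])
    then have "lev (Suc m) (T P' i) \<le> lev (Suc m) (T P i)"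
      by (rule lev_mono[OF T_nonneg[OF P'p]])
    then show "lev (Suc m) (T P' i) \<le> P' i" using P'e[of i] by simp
  qed
  then show ?case using P'p QP' unfolding P'_def by simp
qed

lemma fch_pos: "fch A Q m \<in> pos_cone"
  using fch_inv by blast

lemma fch_gtQ: "Q i < fch A Q m i"
  using fch_inv by blast

lemma fch_lev: "lev m (T (fch A Q m) i) \<le> fch A Q m i"
  using fch_inv by blast

lemma fch_Suc: "fch A Q (Suc m) i = max (lev (Suc m) (T (fch A Q m) i)) ((fch A Q m i + Q i)/2)"
  by simp

lemma fch_dec: "fch A Q (Suc m) i < fch A Q m i"
proof -
  have a: "(fch A Q m i + Q i)/2 < fch A Q m i" using fch_gtQ[of i m] by simp
  have "lev (Suc m) (T (fch A Q m) i) < fch A Q m i"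
  proof (cases "T (fch A Q m) i = 0")
    case True
    then show ?thesis using lev_zero fch_gtQ[of i m] pos_coneD[OF Qp, of i] by simp
  next
    case False
    then have "0 < T (fch A Q m) i" using T_nonneg[OF fch_pos, of m i] by simp
    then show ?thesis using lev_dec_strict fch_lev[of m i] by (meson less_le_trans)
  qed
  then show ?thesis using a by simp
qed

lemma fch_decseq: "decseq (\<lambda>m. fch A Q m i)"
  by (rule decseq_SucI) (use fch_dec in \<open>simp add: less_imp_le\<close>)

lemma fch_gap: "T (fch A Q m) i + \<rho> (T (fch A Q m) i) / 2 \<le> fch A Q (Suc m) i"
proof -
  have "0 \<le> T (fch A Q m) i" by (rule T_nonneg[OF fch_pos])
  then show ?thesis using lev_ge_D[of "T (fch A Q m) i" "Suc m"] by simp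
qed

lemma fch_le_step: "fch A Q (Suc m) i \<le> max (TR (fch A Q m) i) ((fch A Q m i + Q i)/2)"
proof -
  have "0 \<le> T (fch A Q m) i" by (rule T_nonneg[OF fch_pos])
  then show ?thesis using lev_le_TR[of "T (fch A Q m) i" "Suc m"] unfolding TR_def by simp
qed

lemma fch_conv:
  "\<exists>L. (\<forall>i. (\<lambda>m. fch A Q m i) \<longlonglongrightarrow> L i) \<and> L \<in> pos_cone \<and> (\<forall>i. Q i \<le> L i)
      \<and> (\<forall>i. L i \<le> max (TR L i) (Q i))"
proof -
  have "\<forall>i. \<exists>l. (\<lambda>m. fch A Q m i) \<longlonglongrightarrow> l \<and> (\<forall>m. l \<le> fch A Q m i)"
  proof
    fix i
    obtain l where "(\<lambda>m. fch A Q m i) \<longlonglongrightarrow> l" "\<forall>m. l \<le> fch A Q m i"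
      using decseq_convergent[OF fch_decseq, of "Q i" i] fch_gtQ[of i] by (auto simp: less_imp_le)
    then show "\<exists>l. (\<lambda>m. fch A Q m i) \<longlonglongrightarrow> l \<and> (\<forall>m. l \<le> fch A Q m i)" by blast
  qed
  then obtain L where L: "\<And>i. (\<lambda>m. fch A Q m i) \<longlonglongrightarrow> L i" by metis
  have QL: "Q i \<le> L i" for i
    by (rule LIMSEQ_le_const[OF L]) (use fch_gtQ in \<open>auto simp: less_imp_le\<close>)
  have Lp: "L \<in> pos_cone" using QL Qp by (meson order_trans pos_coneD pos_coneI)
  have LL: "L i \<le> max (TR L i) ((L i + Q i)/2)" for i
  proof -
    have l1: "(\<lambda>m. fch A Q (Suc m) i) \<longlonglongrightarrow> L i" using LIMSEQ_Suc[OF L] .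
    have l2: "(\<lambda>m. max (TR (fch A Q m) i) ((fch A Q m i + Q i)/2)) \<longlonglongrightarrow> max (TR L i) ((L i + Q i)/2)"
      by (intro tendsto_max tendsto_divide tendsto_add TR_tendsto[OF fch_pos Lp L] L) auto
    show ?thesis by (rule LIMSEQ_le[OF l1 l2]) (use fch_le_step in auto)
  qed
  have "L i \<le> max (TR L i) (Q i)" for i
    using LL[of i] by (cases "TR L i \<le> (L i + Q i)/2") auto
  then show ?thesis using L Lp QL by blast
qed

lemma fch_conv_w:
  assumes c: "0 \<le> c" and Qw: "Q = w c"
  shows "(\<lambda>m. fch A Q m i) \<longlonglongrightarrow> Q i"
proof -
  obtain L where L: "\<And>i. (\<lambda>m. fch A Q m i) \<longlonglongrightarrow> L i" and Lp: "L \<in> pos_cone"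
    and QL: "\<And>i. Q i \<le> L i" and LQ: "\<And>i. L i \<le> max (TR L i) (Q i)"
    using fch_conv by blast
  have "L \<in> S c" unfolding S_def
  proof (safe intro!: Lp)
    fix j
    have "Q j \<le> max c (TR Q j)" using w_fix[OF c, of j] Qw by simp
    moreover have "TR Q j \<le> TR L j" using TR_mono[OF Qp] QL by (simp add: le_fun_def)
    ultimately show "L j \<le> max c (TR L j)" using LQ[of j] by linarith
  qed
  then have "L i \<le> Q i" using w_upper[OF c] Qw by simp
  then have "L i = Q i" using QL[of i] by simp
  then show ?thesis using L[of i] by simp
qed

lemma fch_junction:
  assumes c: "0 \<le> c" and Qw: "Q = w c" and Q0: "\<And>i. 0 < Q i"
  shows "\<exists>s. \<forall>i. T (fch A Q s) i + \<rho> (T (fch A Q s) i) / 2 < Q i"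
proof -
  have lim: "\<And>j. (\<lambda>m. fch A Q m j) \<longlonglongrightarrow> Q j" using fch_conv_w[OF c Qw] .
  have ev: "eventually (\<lambda>m. T (fch A Q m) i + \<rho> (T (fch A Q m) i) / 2 < Q i) sequentially" for i
  proof -
    have t: "(\<lambda>m. T (fch A Q m) i + \<rho> (T (fch A Q m) i) / 2) \<longlonglongrightarrow> T Q i + \<rho> (T Q i) / 2"
      using T_tendsto[OF fch_pos Qp lim] rho_tendsto[OF T_nonneg[OF fch_pos] T_nonneg[OF Qp]]
      by (intro tendsto_add tendsto_divide) auto
    have "T Q i + \<rho> (T Q i) / 2 < Q i"
    proof (cases "T Q i = 0")
      case True then show ?thesis using Q0[of i] kinf_zero[OF rk] by simp
    next
      case False
      then have "0 < T Q i" using T_nonneg[OF Qp, of i] by simp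
      then have "0 < \<rho> (T Q i)" using kinf_pos[OF rk] by blast
      moreover have "TR Q i \<le> Q i" using w_TR[OF c, of i] Qw by simp
      ultimately show ?thesis unfolding TR_def by simp
    qed
    then show ?thesis using t order_tendstoD(2) by blast
  qed
  have "eventually (\<lambda>m. \<forall>i. T (fch A Q m) i + \<rho> (T (fch A Q m) i) / 2 < Q i) sequentially"
    by (rule eventually_all_finite[OF ev])
  then show ?thesis by (auto simp: eventually_sequentially)
qed

end

end

context mbi
begin

primrec cc :: "nat \<Rightarrow> real" where
  "cc 0 = 1"
| "cc (Suc n) = supnorm (w (cc n)) + 1"

definition V :: "nat \<Rightarrow> 'i \<Rightarrow> real" where
  "V n = w (cc n)"

lemma cc_ge: "real n + 1 \<le> cc n"
proof (induction n)
  case 0 then show ?case by simp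
next
  case (Suc n)
  have "cc n \<le> w (cc n) undefined" using w_ge Suc by simp
  also have "\<dots> \<le> supnorm (w (cc n))" using supnorm_ge[of "w (cc n)" undefined] by simp
  finally show ?case using Suc by simp
qed

lemma cc_pos: "0 \<le> cc n"
  using cc_ge[of n] by simp

lemma V_pos: "V n \<in> pos_cone"
  unfolding V_def using w_pos[OF cc_pos] .

lemma V_big: "real n + 1 \<le> V n i"
  unfolding V_def using w_ge[OF cc_pos, of n i] cc_ge[of n] by simp

lemma V_gt0: "0 < V n i"
  using V_big[of n i] by simp

lemma V_TR: "TR (V n) i \<le> V n i"
  unfolding V_def using w_TR[OF cc_pos] .

lemma V_inc: "V n i < V (Suc n) i"
proof -
  have "V n i \<le> supnorm (V n)" using supnorm_ge[of "V n" i] by simp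
  also have "\<dots> < cc (Suc n)" by (simp add: V_def)
  also have "\<dots> \<le> V (Suc n) i" unfolding V_def using w_ge[OF cc_pos] .
  finally show ?thesis .
qed

definition Bc :: "nat \<Rightarrow> 'i \<Rightarrow> real" where
  "Bc = fch (V 0) (\<lambda>_. 0)"

lemma zero_pos: "(\<lambda>_. 0) \<in> pos_cone"
  by (auto intro: pos_coneI)

lemma w0: "(\<lambda>_. 0) = w 0"
  using w_zero by auto

lemmas Bc_facts = fch_pos[OF V_pos V_gt0 V_TR zero_pos] fch_dec[OF V_pos V_gt0 V_TR zero_pos]
  fch_gap[OF V_pos V_gt0 V_TR zero_pos] fch_conv_w[OF V_pos V_gt0 V_TR zero_pos _ w0]

lemma Bc_pos: "Bc m \<in> pos_cone"
  unfolding Bc_def using Bc_facts(1) .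

lemma Bc_dec: "Bc (Suc m) i < Bc m i"
  unfolding Bc_def using Bc_facts(2) .

lemma Bc_gap: "T (Bc m) i + \<rho> (T (Bc m) i) / 2 \<le> Bc (Suc m) i"
  unfolding Bc_def using Bc_facts(3) .

lemma Bc_lim: "(\<lambda>m. Bc m i) \<longlonglongrightarrow> 0"
  unfolding Bc_def using Bc_facts(4) by simp

lemma Bc0: "Bc 0 = V 0"
  unfolding Bc_def by simp

definition Pc :: "nat \<Rightarrow> nat \<Rightarrow> 'i \<Rightarrow> real" where
  "Pc n = fch (V (Suc n)) (V n)"

lemma V_inc': "\<And>i. V n i < V (Suc n) i" using V_inc .

lemmas Pc_facts = fch_pos[OF V_pos V_inc' V_TR V_pos] fch_dec[OF V_pos V_inc' V_TR V_pos]
  fch_gap[OF V_pos V_inc' V_TR V_pos] fch_gtQ[OF V_pos V_inc' V_TR V_pos]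
  fch_junction[OF V_pos V_inc' V_TR V_pos cc_pos V_def V_gt0]

definition sj :: "nat \<Rightarrow> nat" where
  "sj n = (SOME s. \<forall>i. T (Pc n s) i + \<rho> (T (Pc n s) i) / 2 < V n i)"

lemma sj: "T (Pc n (sj n)) i + \<rho> (T (Pc n (sj n)) i) / 2 < V n i"
proof -
  have "\<exists>s. \<forall>i. T (Pc n s) i + \<rho> (T (Pc n s) i) / 2 < V n i"
    unfolding Pc_def using Pc_facts(5) .
  then show ?thesis unfolding sj_def by (rule someI2_ex) blast
qed

definition len :: "nat \<Rightarrow> nat" where
  "len n = Suc (sj n)"

definition pp :: "nat \<Rightarrow> nat \<Rightarrow> 'i \<Rightarrow> real" where
  "pp n m = (if m \<le> sj n then Pc n m else V n)"

lemma pp_pos: "pp n m \<in> pos_cone"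
  unfolding pp_def Pc_def using Pc_facts(1) V_pos by auto

lemma pp0: "pp n 0 = V (Suc n)"
  unfolding pp_def Pc_def by simp

lemma pp_len: "pp n (len n) = V n"
  unfolding pp_def len_def by simp

lemma pp_strict: "m < len n \<Longrightarrow> pp n (Suc m) i < pp n m i"
  unfolding pp_def len_def Pc_def using Pc_facts(2) Pc_facts(4) by auto

lemma pp_gap: "m < len n \<Longrightarrow> T (pp n m) i + \<rho> (T (pp n m) i) / 2 \<le> pp n (Suc m) i"
proof -
  assume m: "m < len n"
  show ?thesis
  proof (cases "Suc m \<le> sj n")
    case True
    then show ?thesis unfolding pp_def Pc_def using Pc_facts(3) by auto
  next
    case False
    then have "m = sj n" using m unfolding len_def by simp
    then show ?thesis unfolding pp_def using sj[of n i] by simp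
  qed
qed

primrec off :: "nat \<Rightarrow> nat" where
  "off 0 = 0"
| "off (Suc n) = off n + len n"

lemma off_ge: "n \<le> off n"
  by (induction n) (auto simp: len_def)

lemma off_mono: "n \<le> n' \<Longrightarrow> off n \<le> off n'"
proof (induction n' arbitrary: n)
  case 0 then show ?case by simp
next
  case (Suc n')
  show ?case
  proof (cases "n = Suc n'")
    case False
    then have "n \<le> n'" using Suc.prems by simp
    then have "off n \<le> off n'" by (rule Suc.IH)
    then show ?thesis by simp
  qed simp
qed

definition pc :: "nat \<Rightarrow> nat" where
  "pc k = (LEAST n. k < off (Suc n))"

definition U :: "nat \<Rightarrow> 'i \<Rightarrow> real" where
  "U k = pp (pc k) (len (pc k) - (k - off (pc k)))"

lemma pc_props: "off (pc k) \<le> k \<and> k < off (Suc (pc k))"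
proof -
  have ex: "k < off (Suc k)" using off_ge[of "Suc k"] by simp
  have 1: "k < off (Suc (pc k))" unfolding pc_def by (rule LeastI[of "\<lambda>n. k < off (Suc n)", OF ex])
  have 2: "off (pc k) \<le> k"
  proof (cases "pc k")
    case 0 then show ?thesis by simp
  next
    case (Suc n)
    then have "n < pc k" by simp
    then have "\<not> k < off (Suc n)" unfolding pc_def by (rule not_less_Least)
    then show ?thesis using Suc by simp
  qed
  show ?thesis using 1 2 by simp
qed

lemma U_eq:
  assumes a: "off n \<le> k" and b: "k \<le> off (Suc n)"
  shows "U k = pp n (len n - (k - off n))"
proof (cases "k < off (Suc n)")
  case True
  have "pc k = n" unfolding pc_def
  proof (rule Least_equality)
    show "k < off (Suc n)" by (rule True)
    fix y assume y: "k < off (Suc y)"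
    show "n \<le> y"
    proof (rule ccontr)
      assume "\<not> n \<le> y"
      then have "Suc y \<le> n" by simp
      then have "off (Suc y) \<le> off n" by (rule off_mono)
      then show False using y a by simp
    qed
  qed
  then show ?thesis unfolding U_def by simp
next
  case False
  then have k: "k = off (Suc n)" using b by simp
  have "pc k = Suc n" unfolding pc_def
  proof (rule Least_equality)
    show "k < off (Suc (Suc n))" using k by (simp add: len_def)
    fix y assume y: "k < off (Suc y)"
    show "Suc n \<le> y"
    proof (rule ccontr)
      assume "\<not> Suc n \<le> y"
      then have "Suc y \<le> Suc n" by simp
      then have "off (Suc y) \<le> off (Suc n)" by (rule off_mono)
      then show False using y k by simp
    qed
  qed
  then have "U k = pp (Suc n) (len (Suc n))" unfolding U_def using k by simp
  also have "\<dots> = V (Suc n)" by (rule pp_len)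
  also have "\<dots> = pp n (len n - (k - off n))" using k pp0 by simp
  finally show ?thesis .
qed

lemma U_step: "U k i < U (Suc k) i \<and> T (U (Suc k)) i + \<rho> (T (U (Suc k)) i) / 2 \<le> U k i"
proof -
  define n where "n = pc k"
  have a: "off n \<le> k" and b: "k < off (Suc n)" using pc_props[of k] unfolding n_def by auto
  define m where "m = len n - Suc (k - off n)"
  have ml: "m < len n" unfolding m_def using a b by simp
  have e1: "len n - (k - off n) = Suc m" unfolding m_def using a b by simp
  have e2: "len n - (Suc k - off n) = m" unfolding m_def using a b by (simp add: Suc_diff_le)
  have Uk: "U k = pp n (Suc m)" using U_eq[OF a] b e1 by simp
  have USk: "U (Suc k) = pp n m" using U_eq[of n "Suc k"] a b e2 by simp
  show ?thesis unfolding Uk USk using pp_strict[OF ml] pp_gap[OF ml] by simp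
qed

lemma U_pos: "U k \<in> pos_cone"
  unfolding U_def by (rule pp_pos)

lemma U0: "U 0 = V 0"
  using U_eq[of 0 0] pp_len[of 0] by simp

lemma U_off: "U (off n) = V n"
  using U_eq[of n "off n"] pp_len[of n] by simp

subsection \<open>The bi-infinite chain\<close>

definition pch :: "int \<Rightarrow> 'i \<Rightarrow> real" where
  "pch k = (if 0 \<le> k then U (nat k) else Bc (nat (-k)))"

lemma pch_neg: "k < 0 \<Longrightarrow> pch k = Bc (Suc (nat (-k-1))) \<and> pch (k+1) = Bc (nat (-k-1))"
  unfolding pch_def using U0 Bc0 by (auto simp: Suc_nat_eq_nat_zadd1)

lemma pch_pos: "pch k \<in> pos_cone"
  unfolding pch_def using U_pos Bc_pos by auto

lemma pch_step: "pch k i < pch (k+1) i \<and> T (pch (k+1)) i + \<rho> (T (pch (k+1)) i) / 2 \<le> pch k i"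
proof (cases "0 \<le> k")
  case True
  then have "pch k = U (nat k)" "pch (k+1) = U (Suc (nat k))"
    unfolding pch_def by (auto simp: nat_add_distrib)
  then show ?thesis using U_step by simp
next
  case False
  then show ?thesis using pch_neg[of k] Bc_dec Bc_gap by simp
qed

lemma pch_lim: "(\<lambda>n. pch (- int n) i) \<longlonglongrightarrow> 0"
proof -
  have "pch (- int n) = Bc n" for n
  proof -
    have e: "nat (int x + 1) = Suc x" for x :: nat by arith
    show ?thesis unfolding pch_def using U0 Bc0 by (cases n) (auto simp: e)
  qed
  then show ?thesis using Bc_lim by simp
qed

lemma pch_unb: "\<exists>k. M < pch k i"
proof -
  obtain n :: nat where n: "M < real n" using reals_Archimedean2 by blast
  have "pch (int (off n)) = V n" unfolding pch_def using U_off by simp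
  then show ?thesis using V_big[of n i] n by (intro exI[of _ "int (off n)"]) simp
qed

end

lemma kinf_half:
  assumes g: "Kinf g"
  shows "Kinf (\<lambda>t. g t / 2)"
  unfolding Kinf_def
proof (intro conjI allI impI)
  show "continuous_on {0..} (\<lambda>t. g t / 2)"
    using g unfolding Kinf_def by (auto intro!: continuous_intros)
  show "strict_mono_on {0..} (\<lambda>t. g t / 2)"
    by (rule strict_mono_onI) (use kinf_less[OF g] in auto)
  show "g 0 / 2 = 0" using kinf_zero[OF g] by simp
  fix r :: real assume "0 \<le> r" then show "0 \<le> g r / 2" using kinf_nonneg[OF g] by simp
next
  fix M :: real
  obtain r where "r \<ge> 0" "2*M < g r" using g unfolding Kinf_def by blast
  then show "\<exists>r\<ge>0. M < g r / 2" by (intro exI[of _ r]) auto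
qed

lemma sig_mono_fun:
  assumes "\<And>k. f k \<le> g k"
  shows "sig f r \<le> sig g r"
proof (cases "r \<le> 0")
  case False
  define u where "u = ln r"
  define t where "t = u - of_int \<lfloor>u\<rfloor>"
  have t: "0 \<le> t" "t \<le> 1" unfolding t_def by linarith+
  have e: "\<And>h. pl h u = (1 - t) * h \<lfloor>u\<rfloor> + t * h (\<lfloor>u\<rfloor>+1)"
    unfolding pl_def t_def by (simp add: algebra_simps)
  have "(1 - t) * f \<lfloor>u\<rfloor> \<le> (1 - t) * g \<lfloor>u\<rfloor>" using t assms by (intro mult_left_mono) auto
  moreover have "t * f (\<lfloor>u\<rfloor>+1) \<le> t * g (\<lfloor>u\<rfloor>+1)" using t assms by (intro mult_left_mono) auto
  ultimately have "pl f u \<le> pl g u" unfolding e by simp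
  then show ?thesis using False unfolding sig_def u_def by simp
qed (simp add: sig_def)

lemma sig_between:
  fixes f :: "int \<Rightarrow> real"
  assumes inc: "\<And>k. f k < f (k+1)" and r: "0 < r"
  shows "f \<lfloor>ln r\<rfloor> \<le> sig f r" "sig f r \<le> f (\<lfloor>ln r\<rfloor>+1)"
  using pl_bounds[of f, OF inc, of "ln r"] r by (auto simp: sig_def)

context mbi
begin

lemma seqp_pch: "seqp (\<lambda>k. pch k i)"
proof -
  have a: "\<And>k. pch k i < pch (k+1) i" by (rule conjunct1[OF pch_step])
  have b: "\<And>M. \<exists>k. M < pch k i" by (rule pch_unb)
  show ?thesis unfolding seqp_def by (intro conjI allI a pch_lim b)
qed

definition sg :: "real \<Rightarrow> 'i \<Rightarrow> real" where
  "sg r = (\<lambda>i. sig (\<lambda>k. pch k i) r)"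

definition fmin :: "int \<Rightarrow> real" where
  "fmin k = Min (range (\<lambda>i. pch k i))"

definition fmax :: "int \<Rightarrow> real" where
  "fmax k = Max (range (\<lambda>i. pch k i))"

lemma fmin_le: "fmin k \<le> pch k i"
  unfolding fmin_def by (rule Min_le) auto

lemma fmax_ge: "pch k i \<le> fmax k"
  unfolding fmax_def by (rule Max_ge) auto

lemma fmin_att: "\<exists>i. fmin k = pch k i"
proof -
  have "fmin k \<in> range (\<lambda>i. pch k i)" unfolding fmin_def by (rule Min_in) auto
  then show ?thesis by auto
qed

lemma fmax_att: "\<exists>i. fmax k = pch k i"
proof -
  have "fmax k \<in> range (\<lambda>i. pch k i)" unfolding fmax_def by (rule Max_in) auto
  then show ?thesis by auto
qed

lemma pch_nonneg: "0 \<le> pch k i"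
  by (rule pos_coneD[OF pch_pos])

lemma pch_mono: "k \<le> l \<Longrightarrow> pch k i \<le> pch l i"
proof -
  assume kl: "k \<le> l"
  have a: "\<And>k. pch k i < pch (k+1) i" by (rule conjunct1[OF pch_step])
  show ?thesis using inc_le[of "\<lambda>k. pch k i", OF a kl] .
qed

lemma seqp_fmin: "seqp fmin"
  unfolding seqp_def
proof (intro conjI allI)
  fix k
  obtain i where i: "fmin (k+1) = pch (k+1) i" using fmin_att by blast
  show "fmin k < fmin (k+1)" using fmin_le[of k i] pch_step[of k i] i by simp
next
  show "(\<lambda>n. fmin (- int n)) \<longlonglongrightarrow> 0"
  proof (rule tendsto_sandwich[of "\<lambda>_. 0" _ _ "\<lambda>n. pch (- int n) undefined"])
    have "0 \<le> fmin k" for k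
    proof -
      obtain i where "fmin k = pch k i" using fmin_att by blast
      then show ?thesis using pch_nonneg[of k i] by simp
    qed
    then show "\<forall>\<^sub>F n in sequentially. 0 \<le> fmin (- int n)"
      by (intro always_eventually allI)
    show "\<forall>\<^sub>F n in sequentially. fmin (- int n) \<le> pch (- int n) undefined"
      by (intro always_eventually allI fmin_le)
    show "(\<lambda>n. 0) \<longlonglongrightarrow> (0::real)" by simp
    show "(\<lambda>n. pch (- int n) undefined) \<longlonglongrightarrow> 0" by (rule pch_lim)
  qed
next
  fix M
  have "\<forall>i. \<exists>k. M < pch k i" using pch_unb by blast
  from choice[OF this] obtain kf where kf: "\<forall>i. M < pch (kf i) i" by blast
  define K where "K = Max (range kf)"
  obtain i where i: "fmin K = pch K i" using fmin_att by blast
  have "kf i \<le> K" unfolding K_def by (rule Max_ge) auto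
  then have "pch (kf i) i \<le> pch K i" by (rule pch_mono)
  moreover have "M < pch (kf i) i" using kf by blast
  ultimately have "M < fmin K" using i by linarith
  then show "\<exists>k. M < fmin k" by blast
qed

lemma seqp_fmax: "seqp fmax"
  unfolding seqp_def
proof (intro conjI allI)
  fix k
  obtain i where i: "fmax k = pch k i" using fmax_att by blast
  show "fmax k < fmax (k+1)" using fmax_ge[of "k+1" i] pch_step[of k i] i by simp
next
  show "(\<lambda>n. fmax (- int n)) \<longlonglongrightarrow> 0"
  proof (rule LIMSEQ_I)
    fix e :: real assume e: "0 < e"
    have ev: "eventually (\<lambda>n. pch (- int n) i < e) sequentially" for i
      using pch_lim[of i] e by (rule order_tendstoD(2))
    have "eventually (\<lambda>n. \<forall>i. pch (- int n) i < e) sequentially"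
      by (rule eventually_all_finite[OF ev])
    then obtain N where N: "\<And>n. n \<ge> N \<Longrightarrow> \<forall>i. pch (- int n) i < e"
      unfolding eventually_sequentially by blast
    show "\<exists>N. \<forall>n\<ge>N. norm (fmax (- int n) - 0) < e"
    proof (intro exI allI impI)
      fix n assume n: "N \<le> n"
      obtain i where i: "fmax (- int n) = pch (- int n) i" using fmax_att by blast
      show "norm (fmax (- int n) - 0) < e" using N[OF n] i pch_nonneg[of "- int n" i] by simp
    qed
  qed
next
  fix M
  obtain k where "M < pch k undefined" using pch_unb by blast
  then show "\<exists>k. M < fmax k" using fmax_ge[of k undefined] by (intro exI[of _ k]) simp
qed

lemma sg_decay:
  assumes r: "0 \<le> r"
  shows "Gam_rho (\<lambda>t. \<rho> t / 2) Ii gam mu (sg r) \<le> sg r"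
proof (cases "r = 0")
  case True
  have "sg r = (\<lambda>_. 0)" unfolding sg_def True by (simp add: sig_def)
  then show ?thesis unfolding Gam_rho_def le_fun_def using T_zero kinf_zero[OF rk] by simp
next
  case False
  then have rp: "0 < r" using r by simp
  define a where "a = \<lfloor>ln r\<rfloor>"
  have lo: "pch a i \<le> sg r i" for i
    unfolding sg_def a_def using sig_between(1)[of "\<lambda>k. pch k i", OF _ rp] pch_step by blast
  have hi: "sg r i \<le> pch (a+1) i" for i
    unfolding sg_def a_def using sig_between(2)[of "\<lambda>k. pch k i", OF _ rp] pch_step by blast
  have sp: "sg r \<in> pos_cone" using lo pch_nonneg by (meson order_trans pos_coneI)
  show ?thesis unfolding le_fun_def Gam_rho_def
  proof
    fix i
    have Tle: "T (sg r) i \<le> T (pch (a+1)) i" by (rule T_mono[OF sp]) (use hi in \<open>simp add: le_fun_def\<close>)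
    have "\<rho> (T (sg r) i) \<le> \<rho> (T (pch (a+1)) i)" by (rule rho_mono[OF T_nonneg[OF sp] Tle])
    then have "T (sg r) i + \<rho> (T (sg r) i) / 2 \<le> T (pch (a+1)) i + \<rho> (T (pch (a+1)) i) / 2"
      using Tle by simp
    also have "\<dots> \<le> pch a i" using pch_step[of a i] by simp
    also have "\<dots> \<le> sg r i" by (rule lo)
    finally show "T (sg r) i + \<rho> (T (sg r) i) / 2 \<le> sg r i" .
  qed
qed

lemma sg_path: "path_strict_decay Ii gam mu sg"
  unfolding path_strict_decay_def
proof (intro conjI allI impI)
  fix r :: real assume "0 \<le> r"
  show "sg r \<in> pos_cone" unfolding sg_def
    using seqp.sig_nonneg[OF seqp_pch] by (auto intro: pos_coneI)
next
  show "\<exists>\<rho>'. Kinf \<rho>' \<and> (\<forall>r\<ge>0. Gam_rho \<rho>' Ii gam mu (sg r) \<le> sg r)"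
    using kinf_half[OF rk] sg_decay by blast
next
  show "\<exists>\<phi>min \<phi>max. Kinf \<phi>min \<and> Kinf \<phi>max \<and> (\<forall>r\<ge>0. \<forall>i. \<phi>min r \<le> sg r i \<and> sg r i \<le> \<phi>max r)"
  proof (intro exI conjI allI impI)
    show "Kinf (sig fmin)" by (rule seqp.sig_kinf[OF seqp_fmin])
    show "Kinf (sig fmax)" by (rule seqp.sig_kinf[OF seqp_fmax])
    fix r :: real and i
    show "sig fmin r \<le> sg r i" unfolding sg_def by (rule sig_mono_fun) (rule fmin_le)
    show "sg r i \<le> sig fmax r" unfolding sg_def by (rule sig_mono_fun) (rule fmax_ge)
  qed
next
  fix i
  show "Kinf (\<lambda>r. sg r i)" unfolding sg_def using seqp.sig_kinf[OF seqp_pch] by simp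
next
  fix K :: "real set" assume K: "compact K \<and> K \<subseteq> {0<..}"
  have "\<forall>i. \<exists>l L. 0 < l \<and> l \<le> L \<and> (\<forall>r1\<in>K. \<forall>r2\<in>K.
           l * \<bar>r1 - r2\<bar> \<le> \<bar>inv_into {0..} (\<lambda>r. sg r i) r1 - inv_into {0..} (\<lambda>r. sg r i) r2\<bar>
         \<and> \<bar>inv_into {0..} (\<lambda>r. sg r i) r1 - inv_into {0..} (\<lambda>r. sg r i) r2\<bar> \<le> L * \<bar>r1 - r2\<bar>)"
    unfolding sg_def using seqp.sig_lip[OF seqp_pch] K by auto
  then obtain lf Lf where lf: "\<And>i. 0 < lf i \<and> lf i \<le> Lf i \<and> (\<forall>r1\<in>K. \<forall>r2\<in>K.
           lf i * \<bar>r1 - r2\<bar> \<le> \<bar>inv_into {0..} (\<lambda>r. sg r i) r1 - inv_into {0..} (\<lambda>r. sg r i) r2\<bar>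
         \<and> \<bar>inv_into {0..} (\<lambda>r. sg r i) r1 - inv_into {0..} (\<lambda>r. sg r i) r2\<bar> \<le> Lf i * \<bar>r1 - r2\<bar>)"
    by metis
  define l where "l = Min (range lf)"
  define L where "L = Max (range Lf)"
  have l_le: "l \<le> lf i" for i unfolding l_def by (rule Min_le) auto
  have L_ge: "Lf i \<le> L" for i unfolding L_def by (rule Max_ge) auto
  have l0: "0 < l"
  proof -
    have "l \<in> range lf" unfolding l_def by (rule Min_in) auto
    then show ?thesis using lf by auto
  qed
  have lL: "l \<le> L" using l_le[of undefined] L_ge[of undefined] lf[of undefined] by linarith
  show "\<exists>l L. 0 < l \<and> l \<le> L \<and> (\<forall>r1\<in>K. \<forall>r2\<in>K. \<forall>i.
           l * \<bar>r1 - r2\<bar> \<le> \<bar>inv_into {0..} (\<lambda>r. sg r i) r1 - inv_into {0..} (\<lambda>r. sg r i) r2\<bar>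
         \<and> \<bar>inv_into {0..} (\<lambda>r. sg r i) r1 - inv_into {0..} (\<lambda>r. sg r i) r2\<bar> \<le> L * \<bar>r1 - r2\<bar>)"
  proof (rule exI[of _ l], rule exI[of _ L], intro conjI[OF l0] conjI[OF lL] ballI allI)
    fix r1 r2 i assume r1: "r1 \<in> K" and r2: "r2 \<in> K"
    have h: "lf i * \<bar>r1 - r2\<bar> \<le> \<bar>inv_into {0..} (\<lambda>r. sg r i) r1 - inv_into {0..} (\<lambda>r. sg r i) r2\<bar>"
         "\<bar>inv_into {0..} (\<lambda>r. sg r i) r1 - inv_into {0..} (\<lambda>r. sg r i) r2\<bar> \<le> Lf i * \<bar>r1 - r2\<bar>"
      using lf[of i] r1 r2 by auto
    have "l * \<bar>r1 - r2\<bar> \<le> lf i * \<bar>r1 - r2\<bar>" using l_le[of i] by (intro mult_right_mono) auto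
    then have A: "l * \<bar>r1 - r2\<bar> \<le> \<bar>inv_into {0..} (\<lambda>r. sg r i) r1 - inv_into {0..} (\<lambda>r. sg r i) r2\<bar>"
      using h(1) by linarith
    have "Lf i * \<bar>r1 - r2\<bar> \<le> L * \<bar>r1 - r2\<bar>" using L_ge[of i] by (intro mult_right_mono) auto
    then have B: "\<bar>inv_into {0..} (\<lambda>r. sg r i) r1 - inv_into {0..} (\<lambda>r. sg r i) r2\<bar> \<le> L * \<bar>r1 - r2\<bar>"
      using h(2) by linarith
    show "l * \<bar>r1 - r2\<bar> \<le> \<bar>inv_into {0..} (\<lambda>r. sg r i) r1 - inv_into {0..} (\<lambda>r. sg r i) r2\<bar>
         \<and> \<bar>inv_into {0..} (\<lambda>r. sg r i) r1 - inv_into {0..} (\<lambda>r. sg r i) r2\<bar> \<le> L * \<bar>r1 - r2\<bar>"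
      using A B by (rule conjI)
  qed
qed

end

lemma pcD: "s \<in> pos_cone \<Longrightarrow> 0 \<le> s i"
  unfolding pos_cone_def by auto

context gop
begin

lemma b_to_a:
  assumes P: "path_strict_decay Ii gam mu \<sigma>"
  shows "\<exists>\<rho>. Kinf \<rho> \<and> max_MBI (Gam_rho \<rho> Ii gam mu)"
proof -
  note P' = P[unfolded path_strict_decay_def]
  have Ppos: "\<And>r. 0 \<le> r \<Longrightarrow> \<sigma> r \<in> pos_cone" using P'[THEN conjunct1] by blast
  have "\<exists>\<rho>. Kinf \<rho> \<and> (\<forall>r\<ge>0. Gam_rho \<rho> Ii gam mu (\<sigma> r) \<le> \<sigma> r)"
    by (rule P'[THEN conjunct2, THEN conjunct1])
  then obtain \<rho> where rk: "Kinf \<rho>" and dec0: "\<forall>r\<ge>0. Gam_rho \<rho> Ii gam mu (\<sigma> r) \<le> \<sigma> r"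
    by blast
  have dec: "\<And>r. 0 \<le> r \<Longrightarrow> Gam_rho \<rho> Ii gam mu (\<sigma> r) \<le> \<sigma> r" using dec0 by blast
  have "\<exists>\<phi>min \<phi>max. Kinf \<phi>min \<and> Kinf \<phi>max \<and>
        (\<forall>r\<ge>0. \<forall>i. \<phi>min r \<le> \<sigma> r i \<and> \<sigma> r i \<le> \<phi>max r)"
    by (rule P'[THEN conjunct2, THEN conjunct2, THEN conjunct1])
  then obtain \<phi>min \<phi>max where kmin: "Kinf \<phi>min" and kmax: "Kinf \<phi>max"
    and bnd0: "\<forall>r\<ge>0. \<forall>i. \<phi>min r \<le> \<sigma> r i \<and> \<sigma> r i \<le> \<phi>max r"
    by blast
  have bnd: "\<And>r i. 0 \<le> r \<Longrightarrow> \<phi>min r \<le> \<sigma> r i \<and> \<sigma> r i \<le> \<phi>max r" using bnd0 by blast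
  have Ki: "\<And>i. Kinf (\<lambda>r. \<sigma> r i)"
    using P'[THEN conjunct2, THEN conjunct2, THEN conjunct2, THEN conjunct1] by blast
  define iv where "iv = inv_into {0..} \<phi>min"
  have iv: "\<And>y. 0 \<le> y \<Longrightarrow> 0 \<le> iv y \<and> \<phi>min (iv y) = y"
    unfolding iv_def using kinf_inv[OF kmin] by blast
  have iv_lt: "\<And>y x. 0 \<le> y \<Longrightarrow> 0 \<le> x \<Longrightarrow> y < \<phi>min x \<Longrightarrow> iv y < x"
  proof -
    fix y x :: real assume y: "0 \<le> y" and x: "0 \<le> x" and yx: "y < \<phi>min x"
    show "iv y < x"
    proof (rule ccontr)
      assume "\<not> iv y < x"
      then have "\<phi>min x \<le> \<phi>min (iv y)" using kinf_mono_le[OF kmin x] by simp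
      then show False using iv[OF y] yx by simp
    qed
  qed
  have iv_gt: "\<And>y x. 0 \<le> y \<Longrightarrow> 0 \<le> x \<Longrightarrow> \<phi>min x < y \<Longrightarrow> x < iv y"
  proof -
    fix y x :: real assume y: "0 \<le> y" and x: "0 \<le> x" and yx: "\<phi>min x < y"
    show "x < iv y"
    proof (rule ccontr)
      assume "\<not> x < iv y"
      then have "iv y \<le> x" by simp
      then have "\<phi>min (iv y) \<le> \<phi>min x" using kinf_mono_le[OF kmin, of "iv y" x] iv[OF y] by simp
      then show False using iv[OF y] yx by simp
    qed
  qed
  define h where "h k = \<phi>max (iv (exp (of_int k + 1)))" for k :: int
  have sh: "seqp h"
    unfolding seqp_def
  proof (intro conjI allI)
    fix k :: int
    have "iv (exp (of_int k + 1)) < iv (exp (of_int (k+1) + 1))"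
      using iv_gt[of "exp (of_int (k+1) + 1)" "iv (exp (of_int k + 1))"]
        iv[of "exp (of_int k + 1)"] by simp
    then show "h k < h (k+1)" unfolding h_def
      using kinf_less[OF kmax] iv[of "exp (of_int k + 1)"] by simp
  next
    show "(\<lambda>n. h (- int n)) \<longlonglongrightarrow> 0"
    proof (rule LIMSEQ_I)
      fix e :: real assume e: "0 < e"
      have "continuous (at 0 within {0..}) \<phi>max"
        using kmax unfolding Kinf_def by (simp add: continuous_on_eq_continuous_within)
      then obtain d where d: "0 < d" and dH: "\<And>x. x \<in> {0..} \<Longrightarrow> dist x 0 < d \<Longrightarrow> dist (\<phi>max x) (\<phi>max 0) < e"
        unfolding continuous_within_eps_delta using e by blast
      have pd: "0 < \<phi>min d" using kinf_pos[OF kmin d] .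
      obtain N :: nat where N: "1 - ln (\<phi>min d) < real N" using reals_Archimedean2 by blast
      show "\<exists>N. \<forall>n\<ge>N. norm (h (- int n) - 0) < e"
      proof (intro exI allI impI)
        fix n assume n: "N \<le> n"
        define y :: real where "y = exp (of_int (- int n) + 1)"
        have y0: "0 \<le> (y::real)" unfolding y_def by simp
        have "of_int (- int n) + 1 < ln (\<phi>min d)" using N n by simp
        then have "y < \<phi>min d" unfolding y_def using pd by (metis exp_less_cancel_iff exp_ln)
        then have "iv y < d" using iv_lt[OF y0, of d] d by simp
        then have "dist (\<phi>max (iv y)) (\<phi>max 0) < e" using dH[of "iv y"] iv[OF y0] by (simp add: dist_real_def)
        then show "norm (h (- int n) - 0) < e" unfolding h_def y_def[symmetric]
          using kinf_zero[OF kmax] by (simp add: dist_real_def)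
      qed
    qed
  next
    fix M :: real
    obtain x where x: "0 \<le> x" "M < \<phi>max x" using kmax unfolding Kinf_def by blast
    define k where "k = \<lceil>\<phi>min x\<rceil>"
    have "\<phi>min x < of_int k + 2" unfolding k_def by linarith
    also have "\<dots> \<le> exp (of_int k + 1)" using exp_ge_add_one_self[of "of_int k + 1"] by simp
    finally have "x < iv (exp (of_int k + 1))" using iv_gt[OF _ x(1)] by simp
    then have "\<phi>max x < h k" unfolding h_def using kinf_less[OF kmax x(1)] by simp
    then show "\<exists>k. M < h k" using x(2) by (intro exI[of _ k]) simp
  qed
  have key: "\<And>x y. 0 \<le> x \<Longrightarrow> 0 < y \<Longrightarrow> \<phi>min x \<le> y \<Longrightarrow> \<phi>max x \<le> sig h y"
  proof -
    fix x y :: real assume x: "0 \<le> x" and y: "0 < y" and xy: "\<phi>min x \<le> y"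
    have inc: "\<And>k. h k < h (k+1)" using sh unfolding seqp_def by blast
    have "y < exp (of_int \<lfloor>ln y\<rfloor> + 1)"
    proof -
      have "ln y < of_int \<lfloor>ln y\<rfloor> + 1" by linarith
      then show ?thesis using y by (metis exp_less_cancel_iff exp_ln)
    qed
    then have "x < iv (exp (of_int \<lfloor>ln y\<rfloor> + 1))" using iv_gt[OF _ x] xy by simp
    then have "\<phi>max x \<le> h \<lfloor>ln y\<rfloor>" unfolding h_def using kinf_mono_le[OF kmax x] by simp
    also have "\<dots> \<le> sig h y" using sig_between(1)[of h, OF inc y] .
    finally show "\<phi>max x \<le> sig h y" .
  qed
  have rk2: "Kinf (\<lambda>t. \<rho> t / 2)" by (rule kinf_half[OF rk])
  have "max_MBI (Gam_rho (\<lambda>t. \<rho> t / 2) Ii gam mu)"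
    unfolding max_MBI_def
  proof (intro exI conjI ballI impI)
    show "Kinf (sig h)" by (rule seqp.sig_kinf[OF sh])
    fix s b assume sp: "s \<in> pos_cone" and bp: "b \<in> pos_cone"
      and hs: "s \<le> (\<lambda>i. max (b i) (Gam_rho (\<lambda>t. \<rho> t / 2) Ii gam mu s i))"
    define rf where "rf i = inv_into {0..} (\<lambda>r. \<sigma> r i) (s i)" for i
    have rf: "\<And>i. 0 \<le> rf i \<and> \<sigma> (rf i) i = s i"
      unfolding rf_def using kinf_inv[OF Ki] pcD[OF sp] by blast
    define r where "r = Max (range rf)"
    have rge: "\<And>i. rf i \<le> r" unfolding r_def by (rule Max_ge) auto
    obtain k where rk': "r = rf k"
    proof -
      have "r \<in> range rf" unfolding r_def by (rule Max_in) auto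
      then show ?thesis using that by auto
    qed
    have r0: "0 \<le> r" using rf[of k] rk' by simp
    have sle: "\<And>i. s i \<le> \<sigma> r i"
      using rf kinf_mono_le[OF Ki] rge by metis
    have sk: "s k = \<sigma> r k" using rf[of k] rk' by simp
    have sigp: "\<sigma> r \<in> pos_cone" by (rule Ppos[OF r0])
    have alt: "r = 0 \<or> \<phi>min r \<le> supnorm b"
    proof (cases "s k \<le> b k")
      case True
      have "\<phi>min r \<le> \<sigma> r k" using bnd[OF r0] by blast
      also have "\<dots> \<le> b k" using sk True by simp
      also have "\<dots> \<le> supnorm b" using supnorm_ge[of b k] by simp
      finally show ?thesis by simp
    next
      case False
      then have s1: "s k \<le> T s k + \<rho> (T s k) / 2"
        using hs unfolding le_fun_def Gam_rho_def by (metis max_def)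
      define g where "g = T (\<sigma> r) k"
      have Tle: "T s k \<le> g" unfolding g_def by (rule T_mono[OF sp]) (use sle in \<open>simp add: le_fun_def\<close>)
      have "\<rho> (T s k) \<le> \<rho> g" using kinf_mono_le[OF rk T_nonneg[OF sp] Tle] .
      then have s2: "s k \<le> g + \<rho> g / 2" using s1 Tle by simp
      have s3: "g + \<rho> g \<le> s k" using dec[OF r0] sk unfolding le_fun_def Gam_rho_def g_def by simp
      have g0: "0 \<le> g" unfolding g_def by (rule T_nonneg[OF sigp])
      have "g = 0"
      proof (rule ccontr)
        assume "g \<noteq> 0"
        then have "0 < \<rho> g" using kinf_pos[OF rk] g0 by simp
        then show False using s2 s3 by simp
      qed
      then have "\<sigma> r k \<le> 0" using s2 sk kinf_zero[OF rk] by simp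
      then have "\<not> 0 < r" using kinf_pos[OF Ki[of k]] by fastforce
      then show ?thesis using r0 by simp
    qed
    show "supnorm s \<le> sig h (supnorm b)"
    proof (cases "r = 0")
      case True
      have "supnorm s \<le> 0"
      proof (rule supnorm_le)
        fix i
        have "s i \<le> 0" using sle[of i] True kinf_zero[OF Ki[of i]] by simp
        then show "\<bar>s i\<bar> \<le> 0" using pcD[OF sp, of i] by simp
      qed
      then show ?thesis using seqp.sig_nonneg[OF sh] by (meson order_trans)
    next
      case False
      then have rp: "0 < r" using r0 by simp
      have phb: "\<phi>min r \<le> supnorm b" using alt False by simp
      have bpos: "0 < supnorm b" using kinf_pos[OF kmin rp] phb by simp
      have "supnorm s \<le> \<phi>max r"
      proof (rule supnorm_le)
        fix i
        have "s i \<le> \<phi>max r" using sle[of i] bnd[OF r0, of i] by simp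
        then show "\<bar>s i\<bar> \<le> \<phi>max r" using pcD[OF sp, of i] by simp
      qed
      also have "\<dots> \<le> sig h (supnorm b)" by (rule key[OF r0 bpos phb])
      finally show ?thesis .
    qed
  qed
  then show ?thesis using rk2 by blast
qed

end

theorem theorem3p27:
  fixes Ii :: "'i::finite \<Rightarrow> 'i set"
    and gam :: "'i \<Rightarrow> 'i \<Rightarrow> real \<Rightarrow> real"
    and mu :: "'i \<Rightarrow> ('i \<Rightarrow> real) \<Rightarrow> ereal"
  assumes "gain_operator Ii gam mu"
  shows "(\<exists>\<rho>. Kinf \<rho> \<and> max_MBI (Gam_rho \<rho> Ii gam mu))
     \<longleftrightarrow> (\<exists>\<sigma>. path_strict_decay Ii gam mu \<sigma>)"
proof
  assume "\<exists>\<rho>. Kinf \<rho> \<and> max_MBI (Gam_rho \<rho> Ii gam mu)"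
  then obtain \<rho> \<phi> where rk: "Kinf \<rho>" and pk: "Kinf \<phi>"
    and m: "\<forall>s\<in>pos_cone. \<forall>b\<in>pos_cone.
       s \<le> (\<lambda>i. max (b i) (Gam_rho \<rho> Ii gam mu s i)) \<longrightarrow> supnorm s \<le> \<phi> (supnorm b)"
    unfolding max_MBI_def by blast
  have "mbi Ii gam mu \<rho> \<phi>"
    unfolding mbi_def mbi_axioms_def gop_def using assms rk pk m by blast
  then show "\<exists>\<sigma>. path_strict_decay Ii gam mu \<sigma>" using mbi.sg_path by blast
next
  assume "\<exists>\<sigma>. path_strict_decay Ii gam mu \<sigma>"
  then obtain \<sigma> where "path_strict_decay Ii gam mu \<sigma>" by blast
  then show "\<exists>\<rho>. Kinf \<rho> \<and> max_MBI (Gam_rho \<rho> Ii gam mu)"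
    using gop.b_to_a[of Ii gam mu \<sigma>] assms unfolding gop_def by blast
qed

end
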